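(* Let $S$ be a functional PTS specification. For any $\lambda\Pi/S$ context $\Gamma$ and any $\Gamma$-term $M$ of $\lambda\Pi/S$ (i.e. $\mathrm{WF}_{\lambda\Pi/S}(\Gamma)$ and $\Gamma\vdash_{\lambda\Pi/S}M:A$ for some $A$), there is a term $M^-$ of $\lambda\Pi^-/S$ such that $M\longrightarrow_\beta^* M^-$.
   Context: $\lambda\Pi$ is the PTS with sorts $\mathsf{Type},\mathsf{Kind}$, axiom $\mathsf{Type}:\mathsf{Kind}$ and rules $(\mathsf{Type},\mathsf{Type}),(\mathsf{Type},\mathsf{Kind})$ (terms $s\mid x\mid M\,N\mid\lambda x:A.M\mid\Pi x:A.B$, standard PTS typing rules). Given a well-formed $\lambda\Pi$ context $\Sigma$ and rewrite rules $R$, $\lambda\Pi/(\Sigma,R)$ has the $\lambda\Pi$ typing rules except that variables may also be declared in $\Sigma$ (and new declarations must avoid $\Sigma$) and conversion is modulo $\equiv_{\beta R}$, the congruence generated by $\beta$-reduction and the rewrite rules. For a PTS specification $S=(\mathcal S,\mathcal A,\mathcal R)$, $\lambda\Pi/S=\lambda\Pi/(\Sigma_S,R_S)$ where $\Sigma_S$ declares $u_s:\mathsf{Type}$, $\varepsilon_s:u_s\to\mathsf{Type}$ ($s\in\mathcal S$), $\dot s_1:u_{s_2}$ ($(s_1:s_2)\in\mathcal A$), $\dot\pi_{s_1s_2s_3}:\Pi\alpha:u_{s_1}.(\varepsilon_{s_1}\alpha\to u_{s_2})\to u_{s_3}$ ($(s_1,s_2,s_3)\in\mathcal R$), and $R_S$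 consists of $\varepsilon_{s_2}\dot s_1\leadsto u_{s_1}$ for $(s_1:s_2)\in\mathcal A$ and $\varepsilon_{s_3}(\dot\pi_{s_1s_2s_3}AB)\leadsto\Pi x:\varepsilon_{s_1}A.\,\varepsilon_{s_2}(B\,x)$ for $(s_1,s_2,s_3)\in\mathcal R$. A $\Gamma$-term $P$ of type $C$ is at the level of $\mathsf{Kind}$ if $\Gamma\vdash C:\mathsf{Kind}$. A $\mathsf{Kind}$-level $\beta$-redex is a subterm $(\lambda x:B.C)\,P$ at the level of $\mathsf{Kind}$ (in its typing context). The $\lambda\Pi^-/S$ terms are the well-typed $\lambda\Pi/S$ terms that contain no $\mathsf{Kind}$-level $\beta$-redex. *)

theory Defs
  imports Main
begin

text \<open>Bound/context variables are de Bruijn indices (Var 0 is the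
  most recently declared variable); the declarations of the signature Sigma are
  represented as constants Cst c (so new context declarations automatically
  avoid Sigma).\<close>

datatype 'c trm =
    TypeS
  | KindS
  | Var nat
  | Cst 'c
  | App "'c trm" "'c trm"
  | Lam "'c trm" "'c trm"
  | Prod "'c trm" "'c trm"

fun lift :: "nat \<Rightarrow> 'c trm \<Rightarrow> 'c trm" where
  "lift k TypeS = TypeS"
| "lift k KindS = KindS"
| "lift k (Var i) = (if i < k then Var i else Var (Suc i))"
| "lift k (Cst c) = Cst c"
| "lift k (App M N) = App (lift k M) (lift k N)"
| "lift k (Lam A M) = Lam (lift k A) (lift (Suc k) M)"
| "lift k (Prod A B) = Prod (lift k A) (lift (Suc k) B)"

fun subst :: "'c trm \<Rightarrow> nat \<Rightarrow> 'c trm \<Rightarrow> 'c trm" where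
  "subst TypeS k N = TypeS"
| "subst KindS k N = KindS"
| "subst (Var i) k N = (if i < k then Var i else if i = k then N else Var (i - 1))"
| "subst (Cst c) k N = Cst c"
| "subst (App M1 M2) k N = App (subst M1 k N) (subst M2 k N)"
| "subst (Lam A M) k N = Lam (subst A k N) (subst M (Suc k) (lift 0 N))"
| "subst (Prod A B) k N = Prod (subst A k N) (subst B (Suc k) (lift 0 N))"

definition liftn :: "nat \<Rightarrow> 'c trm \<Rightarrow> 'c trm" where
  "liftn n M = (lift 0 ^^ n) M"

inductive ctxclos :: "('c trm \<Rightarrow> 'c trm \<Rightarrow> bool) \<Rightarrow> 'c trm \<Rightarrow> 'c trm \<Rightarrow> bool"
  for r where
  root: "r M N \<Longrightarrow> ctxclos r M N"
| appL: "ctxclos r M M' \<Longrightarrow> ctxclos r (App M N) (App M' N)"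
| appR: "ctxclos r N N' \<Longrightarrow> ctxclos r (App M N) (App M N')"
| lamL: "ctxclos r A A' \<Longrightarrow> ctxclos r (Lam A M) (Lam A' M)"
| lamR: "ctxclos r M M' \<Longrightarrow> ctxclos r (Lam A M) (Lam A M')"
| prodL: "ctxclos r A A' \<Longrightarrow> ctxclos r (Prod A B) (Prod A' B)"
| prodR: "ctxclos r B B' \<Longrightarrow> ctxclos r (Prod A B) (Prod A B')"

inductive beta_root :: "'c trm \<Rightarrow> 'c trm \<Rightarrow> bool" where
  "beta_root (App (Lam A M) N) (subst M 0 N)"

abbreviation beta :: "'c trm \<Rightarrow> 'c trm \<Rightarrow> bool" where
  "beta \<equiv> ctxclos beta_root"

abbreviation beta_star :: "'c trm \<Rightarrow> 'c trm \<Rightarrow> bool" where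
  "beta_star \<equiv> beta\<^sup>*\<^sup>*"

definition conv_betaR :: "('c trm \<Rightarrow> 'c trm \<Rightarrow> bool) \<Rightarrow> 'c trm \<Rightarrow> 'c trm \<Rightarrow> bool" where
  "conv_betaR R = (\<lambda>x y. ctxclos (\<lambda>a b. beta_root a b \<or> R a b) x y
                        \<or> ctxclos (\<lambda>a b. beta_root a b \<or> R a b) y x)\<^sup>*\<^sup>*"

definition is_sort :: "'c trm \<Rightarrow> bool" where
  "is_sort s \<longleftrightarrow> s = TypeS \<or> s = KindS"

text \<open>sig c = Some A: the signature declares c : A.  R: root rewrite relation.\<close>
inductive wf_ctx :: "('c \<Rightarrow> 'c trm option) \<Rightarrow> ('c trm \<Rightarrow> 'c trm \<Rightarrow> bool) \<Rightarrow> 'c trm list \<Rightarrow> bool"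
  and has_type :: "('c \<Rightarrow> 'c trm option) \<Rightarrow> ('c trm \<Rightarrow> 'c trm \<Rightarrow> bool) \<Rightarrow> 'c trm list \<Rightarrow> 'c trm \<Rightarrow> 'c trm \<Rightarrow> bool"
  for sig R where
  wf_nil: "wf_ctx sig R []"
| wf_cons: "has_type sig R \<Gamma> A s \<Longrightarrow> is_sort s \<Longrightarrow> wf_ctx sig R (A # \<Gamma>)"
| t_ax: "wf_ctx sig R \<Gamma> \<Longrightarrow> has_type sig R \<Gamma> TypeS KindS"
| t_var: "wf_ctx sig R \<Gamma> \<Longrightarrow> i < length \<Gamma> \<Longrightarrow> has_type sig R \<Gamma> (Var i) (liftn (Suc i) (\<Gamma> ! i))"
| t_cst: "wf_ctx sig R \<Gamma> \<Longrightarrow> sig c = Some A \<Longrightarrow> has_type sig R \<Gamma> (Cst c) A"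
| t_prod: "has_type sig R \<Gamma> A TypeS \<Longrightarrow> has_type sig R (A # \<Gamma>) B s \<Longrightarrow> is_sort s
           \<Longrightarrow> has_type sig R \<Gamma> (Prod A B) s"
| t_lam: "has_type sig R \<Gamma> (Prod A B) s \<Longrightarrow> is_sort s \<Longrightarrow> has_type sig R (A # \<Gamma>) M B
           \<Longrightarrow> has_type sig R \<Gamma> (Lam A M) (Prod A B)"
| t_app: "has_type sig R \<Gamma> M (Prod A B) \<Longrightarrow> has_type sig R \<Gamma> N A
           \<Longrightarrow> has_type sig R \<Gamma> (App M N) (subst B 0 N)"
| t_conv: "has_type sig R \<Gamma> M A \<Longrightarrow> has_type sig R \<Gamma> B s \<Longrightarrow> is_sort s \<Longrightarrow> conv_betaR R A B
           \<Longrightarrow> has_type sig R \<Gamma> M B"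

definition pts_spec :: "'s set \<Rightarrow> ('s \<times> 's) set \<Rightarrow> ('s \<times> 's \<times> 's) set \<Rightarrow> bool" where
  "pts_spec Srt Ax Rl \<longleftrightarrow>
     (\<forall>(s1, s2) \<in> Ax. s1 \<in> Srt \<and> s2 \<in> Srt) \<and>
     (\<forall>(s1, s2, s3) \<in> Rl. s1 \<in> Srt \<and> s2 \<in> Srt \<and> s3 \<in> Srt)"

definition functional_spec :: "'s set \<Rightarrow> ('s \<times> 's) set \<Rightarrow> ('s \<times> 's \<times> 's) set \<Rightarrow> bool" where
  "functional_spec Srt Ax Rl \<longleftrightarrow>
     (\<forall>s1 s2 s2'. (s1, s2) \<in> Ax \<longrightarrow> (s1, s2') \<in> Ax \<longrightarrow> s2 = s2') \<and>
     (\<forall>s1 s2 s3 s3'. (s1, s2, s3) \<in> Rl \<longrightarrow> (s1, s2, s3') \<in> Rl \<longrightarrow> s3 = s3')"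

text \<open>Constants of Sigma_S: u_s, eps_s, dot s1 (annotated also with its axiom
  target s2), pi_{s1 s2 s3}.\<close>
datatype 's cst = U 's | Eps 's | Dot 's 's | PiC 's 's 's

fun sigS :: "'s set \<Rightarrow> ('s \<times> 's) set \<Rightarrow> ('s \<times> 's \<times> 's) set \<Rightarrow> 's cst \<Rightarrow> 's cst trm option" where
  "sigS Srt Ax Rl (U s) = (if s \<in> Srt then Some TypeS else None)"
| "sigS Srt Ax Rl (Eps s) = (if s \<in> Srt then Some (Prod (Cst (U s)) TypeS) else None)"
| "sigS Srt Ax Rl (Dot s1 s2) = (if (s1, s2) \<in> Ax then Some (Cst (U s2)) else None)"
| "sigS Srt Ax Rl (PiC s1 s2 s3) =
     (if (s1, s2, s3) \<in> Rl then
        Some (Prod (Cst (U s1))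
                (Prod (Prod (App (Cst (Eps s1)) (Var 0)) (Cst (U s2)))
                      (Cst (U s3))))
      else None)"

inductive RS :: "('s \<times> 's) set \<Rightarrow> ('s \<times> 's \<times> 's) set \<Rightarrow> 's cst trm \<Rightarrow> 's cst trm \<Rightarrow> bool"
  for Ax Rl where
  r_ax: "(s1, s2) \<in> Ax \<Longrightarrow> RS Ax Rl (App (Cst (Eps s2)) (Cst (Dot s1 s2))) (Cst (U s1))"
| r_rl: "(s1, s2, s3) \<in> Rl \<Longrightarrow>
         RS Ax Rl (App (Cst (Eps s3)) (App (App (Cst (PiC s1 s2 s3)) A) B))
                  (Prod (App (Cst (Eps s1)) A) (App (Cst (Eps s2)) (App (lift 0 B) (Var 0))))"

abbreviation wfS where "wfS Srt Ax Rl \<equiv> wf_ctx (sigS Srt Ax Rl) (RS Ax Rl)"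
abbreviation typS where "typS Srt Ax Rl \<equiv> has_type (sigS Srt Ax Rl) (RS Ax Rl)"

text \<open>subterm_ctx \<Gamma> M \<Delta> N: N occurs as a subterm of M, and \<Delta> is the context
  of that occurrence (\<Gamma> extended by the binders crossed).\<close>
inductive subterm_ctx :: "'c trm list \<Rightarrow> 'c trm \<Rightarrow> 'c trm list \<Rightarrow> 'c trm \<Rightarrow> bool" where
  refl: "subterm_ctx \<Gamma> M \<Gamma> M"
| appL: "subterm_ctx \<Gamma> M \<Delta> N \<Longrightarrow> subterm_ctx \<Gamma> (App M M2) \<Delta> N"
| appR: "subterm_ctx \<Gamma> M \<Delta> N \<Longrightarrow> subterm_ctx \<Gamma> (App M1 M) \<Delta> N"
| lamL: "subterm_ctx \<Gamma> A \<Delta> N \<Longrightarrow> subterm_ctx \<Gamma> (Lam A M) \<Delta> N"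
| lamR: "subterm_ctx (A # \<Gamma>) M \<Delta> N \<Longrightarrow> subterm_ctx \<Gamma> (Lam A M) \<Delta> N"
| prodL: "subterm_ctx \<Gamma> A \<Delta> N \<Longrightarrow> subterm_ctx \<Gamma> (Prod A B) \<Delta> N"
| prodR: "subterm_ctx (A # \<Gamma>) B \<Delta> N \<Longrightarrow> subterm_ctx \<Gamma> (Prod A B) \<Delta> N"

definition kind_level where
  "kind_level sig R \<Delta> P \<longleftrightarrow> (\<exists>C. has_type sig R \<Delta> P C \<and> has_type sig R \<Delta> C KindS)"

definition has_kind_redex where
  "has_kind_redex sig R \<Gamma> M \<longleftrightarrow>
     (\<exists>\<Delta> B C P. subterm_ctx \<Gamma> M \<Delta> (App (Lam B C) P) \<and>
                kind_level sig R \<Delta> (App (Lam B C) P))"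

definition minus_term where
  "minus_term Srt Ax Rl \<Gamma> M \<longleftrightarrow>
     (\<exists>A. typS Srt Ax Rl \<Gamma> M A) \<and> \<not> has_kind_redex (sigS Srt Ax Rl) (RS Ax Rl) \<Gamma> M"

end

theory Submission
  imports Defs
begin


lemma subst_eq [simp]: "subst (Var k) k u = u" by simp

lemma lift_lift:
    "i < k + 1 \<Longrightarrow> lift (Suc k) (lift i t) = lift i (lift k t)"
  by (induct t arbitrary: i k) auto

lemma lift_subst [simp]:
    "j < i + 1 \<Longrightarrow> lift i (subst t j s) = subst (lift (i + 1) t) j (lift i s)"
  by (induct t arbitrary: i j s)
    (simp_all add: diff_Suc lift_lift split: nat.split)

lemma lift_subst_lt:
    "i < j + 1 \<Longrightarrow> lift i (subst t j s) = subst (lift i t) (j + 1) (lift i s)"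
  by (induct t arbitrary: i j s) (auto simp: lift_lift)

lemma subst_lift [simp]:
    "subst (lift k t) k s = t"
  by (induct t arbitrary: k s) simp_all

lemma subst_subst:
    "i < j + 1 \<Longrightarrow> subst (subst t (Suc j) (lift i v)) i (subst u j v) = subst (subst t i u) j v"
  by (induct t arbitrary: i j u v)
    (simp_all add: diff_Suc lift_lift [symmetric] lift_subst_lt
      split: nat.split)

lemma liftn_0 [simp]: "liftn 0 M = M" by (simp add: liftn_def)
lemma liftn_Suc: "liftn (Suc n) M = lift 0 (liftn n M)" by (simp add: liftn_def)

abbreviation red1 :: "('c trm \<Rightarrow> 'c trm \<Rightarrow> bool) \<Rightarrow> 'c trm \<Rightarrow> 'c trm \<Rightarrow> bool" where
  "red1 R \<equiv> ctxclos (\<lambda>a b. beta_root a b \<or> R a b)"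

lemma star_App: "(ctxclos r)\<^sup>*\<^sup>* M M' \<Longrightarrow> (ctxclos r)\<^sup>*\<^sup>* N N' \<Longrightarrow> (ctxclos r)\<^sup>*\<^sup>* (App M N) (App M' N')"
proof -
  assume a: "(ctxclos r)\<^sup>*\<^sup>* M M'" and b: "(ctxclos r)\<^sup>*\<^sup>* N N'"
  from a have "(ctxclos r)\<^sup>*\<^sup>* (App M N) (App M' N)"
    by induct (auto intro: rtranclp.rtrancl_into_rtrancl ctxclos.appL)
  moreover from b have "(ctxclos r)\<^sup>*\<^sup>* (App M' N) (App M' N')"
    by induct (auto intro: rtranclp.rtrancl_into_rtrancl ctxclos.appR)
  ultimately show ?thesis by simp
qed

lemma star_Lam: "(ctxclos r)\<^sup>*\<^sup>* M M' \<Longrightarrow> (ctxclos r)\<^sup>*\<^sup>* N N' \<Longrightarrow> (ctxclos r)\<^sup>*\<^sup>* (Lam M N) (Lam M' N')"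
proof -
  assume a: "(ctxclos r)\<^sup>*\<^sup>* M M'" and b: "(ctxclos r)\<^sup>*\<^sup>* N N'"
  from a have "(ctxclos r)\<^sup>*\<^sup>* (Lam M N) (Lam M' N)"
    by induct (auto intro: rtranclp.rtrancl_into_rtrancl ctxclos.lamL)
  moreover from b have "(ctxclos r)\<^sup>*\<^sup>* (Lam M' N) (Lam M' N')"
    by induct (auto intro: rtranclp.rtrancl_into_rtrancl ctxclos.lamR)
  ultimately show ?thesis by simp
qed

lemma star_Prod: "(ctxclos r)\<^sup>*\<^sup>* M M' \<Longrightarrow> (ctxclos r)\<^sup>*\<^sup>* N N' \<Longrightarrow> (ctxclos r)\<^sup>*\<^sup>* (Prod M N) (Prod M' N')"
proof -
  assume a: "(ctxclos r)\<^sup>*\<^sup>* M M'" and b: "(ctxclos r)\<^sup>*\<^sup>* N N'"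
  from a have "(ctxclos r)\<^sup>*\<^sup>* (Prod M N) (Prod M' N)"
    by induct (auto intro: rtranclp.rtrancl_into_rtrancl ctxclos.prodL)
  moreover from b have "(ctxclos r)\<^sup>*\<^sup>* (Prod M' N) (Prod M' N')"
    by induct (auto intro: rtranclp.rtrancl_into_rtrancl ctxclos.prodR)
  ultimately show ?thesis by simp
qed

lemma ctxclos_mono: "ctxclos r M N \<Longrightarrow> (\<And>a b. r a b \<Longrightarrow> r' a b) \<Longrightarrow> ctxclos r' M N"
  by (induct rule: ctxclos.induct) (auto intro: ctxclos.intros)

lemma ctxclos_lift:
  assumes "\<And>a b k. r a b \<Longrightarrow> r (lift k a) (lift k b)"
  shows "ctxclos r M N \<Longrightarrow> ctxclos r (lift k M) (lift k N)"
  by (induct arbitrary: k rule: ctxclos.induct) (auto intro: ctxclos.intros assms)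

lemma ctxclos_subst:
  assumes "\<And>a b k L. r a b \<Longrightarrow> r (subst a k L) (subst b k L)"
  shows "ctxclos r M N \<Longrightarrow> ctxclos r (subst M k L) (subst N k L)"
  by (induct arbitrary: k L rule: ctxclos.induct) (auto intro: ctxclos.intros assms)

lemma star_lift:
  assumes "\<And>a b k. r a b \<Longrightarrow> r (lift k a) (lift k b)"
  shows "(ctxclos r)\<^sup>*\<^sup>* M N \<Longrightarrow> (ctxclos r)\<^sup>*\<^sup>* (lift k M) (lift k N)"
  by (induct rule: rtranclp.induct) (auto intro: rtranclp.rtrancl_into_rtrancl ctxclos_lift assms)

lemma star_subst:
  assumes "\<And>a b k L. r a b \<Longrightarrow> r (subst a k L) (subst b k L)"
  shows "(ctxclos r)\<^sup>*\<^sup>* M N \<Longrightarrow> (ctxclos r)\<^sup>*\<^sup>* (subst M k L) (subst N k L)"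
  by (induct rule: rtranclp.induct) (auto intro: rtranclp.rtrancl_into_rtrancl ctxclos_subst assms)

lemma star_subst2:
  assumes "\<And>a b k. r a b \<Longrightarrow> r (lift k a) (lift k b)"
  shows "ctxclos r N N' \<Longrightarrow> (ctxclos r)\<^sup>*\<^sup>* (subst M k N) (subst M k N')"
proof (induct M arbitrary: k N N')
  case (Lam A M) thus ?case using ctxclos_lift[where r=r, OF assms] by (simp add: star_Lam)
next
  case (Prod A M) thus ?case using ctxclos_lift[where r=r, OF assms] by (simp add: star_Prod)
qed (auto simp: star_App)

lemma star_subst2':
  assumes "\<And>a b k. r a b \<Longrightarrow> r (lift k a) (lift k b)"
  shows "(ctxclos r)\<^sup>*\<^sup>* N N' \<Longrightarrow> (ctxclos r)\<^sup>*\<^sup>* (subst M k N) (subst M k N')"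
  by (induct rule: rtranclp.induct) (auto intro: rtranclp_trans star_subst2 assms)

lemma beta_root_lift: "beta_root a b \<Longrightarrow> beta_root (lift k a) (lift k b)"
  by (induct rule: beta_root.induct) (auto intro: beta_root.intros[of _ "lift (Suc k) _", simplified])

lemma beta_root_subst: "beta_root a b \<Longrightarrow> beta_root (subst a k L) (subst b k L)"
  apply (induct rule: beta_root.induct)
  apply simp
  by (metis beta_root.intros less_Suc_eq_0_disj subst_subst zero_less_Suc Suc_eq_plus1)

lemma RS_lift: "RS Ax Rl a b \<Longrightarrow> RS Ax Rl (lift k a) (lift k b)"
  by (induct rule: RS.induct) (auto intro: RS.intros simp: lift_lift[of 0, simplified])

lemma RS_subst: "RS Ax Rl a b \<Longrightarrow> RS Ax Rl (subst a k L) (subst b k L)"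
proof (induct rule: RS.induct)
  case (r_rl s1 s2 s3 A B)
  have e: "subst (lift 0 B) (Suc k) (lift 0 L) = lift 0 (subst B k L)"
    using lift_subst_lt[of 0 k B L] by simp
  show ?case using r_rl by (simp add: e RS.r_rl)
qed (auto intro: RS.intros)


abbreviation conv where "conv Ax Rl \<equiv> conv_betaR (RS Ax Rl)"
abbreviation rd where "rd Ax Rl \<equiv> red1 (RS Ax Rl)"
abbreviation rds where "rds Ax Rl \<equiv> (red1 (RS Ax Rl))\<^sup>*\<^sup>*"

lemma rtranclp_map: assumes "\<And>a b. P a b \<Longrightarrow> P (f a) (f b)" shows "P\<^sup>*\<^sup>* x y \<Longrightarrow> P\<^sup>*\<^sup>* (f x) (f y)"
  by (induct rule: rtranclp.induct) (auto intro: rtranclp.rtrancl_into_rtrancl assms)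

lemma conv_refl [simp,intro]: "conv Ax Rl M M" by (simp add: conv_betaR_def)

lemma conv_sym: "conv Ax Rl M N \<Longrightarrow> conv Ax Rl N M"
  unfolding conv_betaR_def
  by (induct rule: rtranclp.induct) (auto intro: converse_rtranclp_into_rtranclp)

lemma conv_trans: "conv Ax Rl M N \<Longrightarrow> conv Ax Rl N L \<Longrightarrow> conv Ax Rl M L"
  unfolding conv_betaR_def by (rule rtranclp_trans)

lemma rd_conv: "rd Ax Rl M N \<Longrightarrow> conv Ax Rl M N"
  unfolding conv_betaR_def by auto

lemma rds_conv: "rds Ax Rl M N \<Longrightarrow> conv Ax Rl M N"
  by (induct rule: rtranclp.induct) (auto intro: conv_trans rd_conv)

lemma rds_conv': "rds Ax Rl M N \<Longrightarrow> conv Ax Rl N M"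
  by (rule conv_sym, rule rds_conv)

lemma conv_AppL: "conv Ax Rl M M' \<Longrightarrow> conv Ax Rl (App M N) (App M' N)"
  unfolding conv_betaR_def by (erule rtranclp_map[rotated]) (auto intro: ctxclos.intros)
lemma conv_AppR: "conv Ax Rl N N' \<Longrightarrow> conv Ax Rl (App M N) (App M N')"
  unfolding conv_betaR_def by (erule rtranclp_map[rotated]) (auto intro: ctxclos.intros)
lemma conv_LamL: "conv Ax Rl M M' \<Longrightarrow> conv Ax Rl (Lam M N) (Lam M' N)"
  unfolding conv_betaR_def by (erule rtranclp_map[rotated]) (auto intro: ctxclos.intros)
lemma conv_LamR: "conv Ax Rl N N' \<Longrightarrow> conv Ax Rl (Lam M N) (Lam M N')"
  unfolding conv_betaR_def by (erule rtranclp_map[rotated]) (auto intro: ctxclos.intros)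
lemma conv_ProdL: "conv Ax Rl M M' \<Longrightarrow> conv Ax Rl (Prod M N) (Prod M' N)"
  unfolding conv_betaR_def by (erule rtranclp_map[rotated]) (auto intro: ctxclos.intros)
lemma conv_ProdR: "conv Ax Rl N N' \<Longrightarrow> conv Ax Rl (Prod M N) (Prod M N')"
  unfolding conv_betaR_def by (erule rtranclp_map[rotated]) (auto intro: ctxclos.intros)

lemma conv_Prod: "conv Ax Rl M M' \<Longrightarrow> conv Ax Rl N N' \<Longrightarrow> conv Ax Rl (Prod M N) (Prod M' N')"
  by (blast intro: conv_trans conv_ProdL conv_ProdR)

lemma rroot_lift: "beta_root a b \<or> RS Ax Rl a b \<Longrightarrow> beta_root (lift k a) (lift k b) \<or> RS Ax Rl (lift k a) (lift k b)"
  using beta_root_lift RS_lift by blast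

lemma rroot_subst: "beta_root a b \<or> RS Ax Rl a b \<Longrightarrow> beta_root (subst a k L) (subst b k L) \<or> RS Ax Rl (subst a k L) (subst b k L)"
  using beta_root_subst RS_subst by blast

lemma rd_lift: "rd Ax Rl M N \<Longrightarrow> rd Ax Rl (lift k M) (lift k N)"
  by (rule ctxclos_lift[where r="\<lambda>a b. beta_root a b \<or> RS Ax Rl a b", OF rroot_lift])

lemma rd_subst: "rd Ax Rl M N \<Longrightarrow> rd Ax Rl (subst M k L) (subst N k L)"
  by (rule ctxclos_subst[where r="\<lambda>a b. beta_root a b \<or> RS Ax Rl a b", OF rroot_subst])

lemma rds_lift: "rds Ax Rl M N \<Longrightarrow> rds Ax Rl (lift k M) (lift k N)"
  by (rule star_lift[where r="\<lambda>a b. beta_root a b \<or> RS Ax Rl a b", OF rroot_lift])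

lemma rds_subst: "rds Ax Rl M N \<Longrightarrow> rds Ax Rl (subst M k L) (subst N k L)"
  by (rule star_subst[where r="\<lambda>a b. beta_root a b \<or> RS Ax Rl a b", OF rroot_subst])

lemma rds_subst2: "rds Ax Rl N N' \<Longrightarrow> rds Ax Rl (subst M k N) (subst M k N')"
  by (rule star_subst2'[where r="\<lambda>a b. beta_root a b \<or> RS Ax Rl a b", OF rroot_lift])

lemma conv_lift: "conv Ax Rl M N \<Longrightarrow> conv Ax Rl (lift k M) (lift k N)"
  unfolding conv_betaR_def by (erule rtranclp_map[rotated]) (auto intro: rd_lift)

lemma conv_subst: "conv Ax Rl M N \<Longrightarrow> conv Ax Rl (subst M k L) (subst N k L)"
  unfolding conv_betaR_def by (erule rtranclp_map[rotated]) (auto intro: rd_subst)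

lemma conv_subst2: "conv Ax Rl N N' \<Longrightarrow> conv Ax Rl (subst M k N) (subst M k N')"
proof -
  have st: "\<And>a b. rd Ax Rl a b \<or> rd Ax Rl b a \<Longrightarrow> conv Ax Rl (subst M k a) (subst M k b)"
    using rds_subst2 rds_conv rds_conv' by blast
  show "conv Ax Rl N N' \<Longrightarrow> ?thesis"
    unfolding conv_betaR_def
    by (induct rule: rtranclp.induct) (auto intro: conv_trans[unfolded conv_betaR_def] st[unfolded conv_betaR_def])
qed


section \<open>Parallel reduction and confluence\<close>

inductive par :: "('s \<times> 's) set \<Rightarrow> ('s \<times> 's \<times> 's) set \<Rightarrow> 's cst trm \<Rightarrow> 's cst trm \<Rightarrow> bool"
  for Ax Rl where
  p_T: "par Ax Rl TypeS TypeS"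
| p_K: "par Ax Rl KindS KindS"
| p_Var: "par Ax Rl (Var i) (Var i)"
| p_Cst: "par Ax Rl (Cst c) (Cst c)"
| p_App: "par Ax Rl M M' \<Longrightarrow> par Ax Rl N N' \<Longrightarrow> par Ax Rl (App M N) (App M' N')"
| p_Lam: "par Ax Rl M M' \<Longrightarrow> par Ax Rl N N' \<Longrightarrow> par Ax Rl (Lam M N) (Lam M' N')"
| p_Prod: "par Ax Rl M M' \<Longrightarrow> par Ax Rl N N' \<Longrightarrow> par Ax Rl (Prod M N) (Prod M' N')"
| p_beta: "par Ax Rl M M' \<Longrightarrow> par Ax Rl N N' \<Longrightarrow> par Ax Rl (App (Lam A M) N) (subst M' 0 N')"
| p_ax: "(s1, s2) \<in> Ax \<Longrightarrow> par Ax Rl (App (Cst (Eps s2)) (Cst (Dot s1 s2))) (Cst (U s1))"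
| p_rl: "(s1, s2, s3) \<in> Rl \<Longrightarrow> par Ax Rl A A' \<Longrightarrow> par Ax Rl B B' \<Longrightarrow>
     par Ax Rl (App (Cst (Eps s3)) (App (App (Cst (PiC s1 s2 s3)) A) B))
       (Prod (App (Cst (Eps s1)) A') (App (Cst (Eps s2)) (App (lift 0 B') (Var 0))))"

lemma par_refl [simp, intro]: "par Ax Rl M M"
  by (induct M) (auto intro: par.intros)

lemma par_lift: "par Ax Rl M M' \<Longrightarrow> par Ax Rl (lift k M) (lift k M')"
proof (induct arbitrary: k rule: par.induct)
  case (p_beta M M' N N' A)
  thus ?case using par.p_beta[of Ax Rl "lift (Suc k) M" "lift (Suc k) M'" "lift k N" "lift k N'" "lift k A"]
    by simp
next
  case (p_rl s1 s2 s3 A A' B B')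
  thus ?case using par.p_rl[of s1 s2 s3 Rl Ax "lift k A" "lift k A'" "lift k B" "lift k B'"]
    by (simp add: lift_lift[of 0, simplified])
qed (auto intro: par.intros)

lemma par_subst: "par Ax Rl M M' \<Longrightarrow> par Ax Rl N N' \<Longrightarrow> par Ax Rl (subst M k N) (subst M' k N')"
proof (induct arbitrary: k N N' rule: par.induct)
  case (p_beta M M' N0 N0' A)
  have "par Ax Rl (App (Lam (subst A k N) (subst M (Suc k) (lift 0 N))) (subst N0 k N))
     (subst (subst M' (Suc k) (lift 0 N')) 0 (subst N0' k N'))"
    using p_beta by (intro par.p_beta) (auto intro: par_lift)
  thus ?case using subst_subst[of 0 k M' N' N0'] by simp
next
  case (p_rl s1 s2 s3 A A' B B')
  have e: "subst (lift 0 B') (Suc k) (lift 0 N') = lift 0 (subst B' k N')"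
    using lift_subst_lt[of 0 k B' N'] by simp
  show ?case using p_rl by (simp add: e par.p_rl)
next
  case (p_Lam M M' N0 N0') thus ?case by (simp add: par.p_Lam par_lift)
next
  case (p_Prod M M' N0 N0') thus ?case by (simp add: par.p_Prod par_lift)
qed (auto intro: par.intros par_lift)

fun cd :: "('s \<times> 's) set \<Rightarrow> ('s \<times> 's \<times> 's) set \<Rightarrow> 's cst trm \<Rightarrow> 's cst trm" where
  "cd Ax Rl (App (Lam A M) N) = subst (cd Ax Rl M) 0 (cd Ax Rl N)"
| "cd Ax Rl (App (Cst (Eps s)) (Cst (Dot s1 s2))) =
     (if s = s2 \<and> (s1, s2) \<in> Ax then Cst (U s1) else App (Cst (Eps s)) (Cst (Dot s1 s2)))"
| "cd Ax Rl (App (Cst (Eps s)) (App (App (Cst (PiC s1 s2 s3)) A) B)) =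
     (if s = s3 \<and> (s1, s2, s3) \<in> Rl
      then Prod (App (Cst (Eps s1)) (cd Ax Rl A)) (App (Cst (Eps s2)) (App (lift 0 (cd Ax Rl B)) (Var 0)))
      else App (Cst (Eps s)) (App (App (Cst (PiC s1 s2 s3)) (cd Ax Rl A)) (cd Ax Rl B)))"
| "cd Ax Rl (App M N) = App (cd Ax Rl M) (cd Ax Rl N)"
| "cd Ax Rl (Lam A M) = Lam (cd Ax Rl A) (cd Ax Rl M)"
| "cd Ax Rl (Prod A M) = Prod (cd Ax Rl A) (cd Ax Rl M)"
| "cd Ax Rl M = M"

lemma cd_App_other:
  assumes "\<And>A M0. M \<noteq> Lam A M0"
    and "\<And>s s1 s2. M = Cst (Eps s) \<Longrightarrow> N \<noteq> Cst (Dot s1 s2)"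
    and "\<And>s s1 s2 s3 A B. M = Cst (Eps s) \<Longrightarrow> N \<noteq> App (App (Cst (PiC s1 s2 s3)) A) B"
  shows "cd Ax Rl (App M N) = App (cd Ax Rl M) (cd Ax Rl N)"
  using assms by (cases "(Ax, Rl, App M N)" rule: cd.cases) (simp_all, metis+)

inductive_cases parLamE: "par Ax Rl (Lam A M) N"
inductive_cases parCstE: "par Ax Rl (Cst c) N"
inductive_cases parPiE2: "par Ax Rl (App (App (Cst (PiC s1 s2 s3)) A) B) N"
inductive_cases parPiE1: "par Ax Rl (App (Cst (PiC s1 s2 s3)) A) N"

lemma par_cd: "par Ax Rl M N \<Longrightarrow> par Ax Rl N (cd Ax Rl M)"
proof (induct rule: par.induct)
  case (p_App M M' N N')
  show ?case
  proof (cases "\<exists>A M0. M = Lam A M0")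
    case True
    then obtain A M0 where M: "M = Lam A M0" by blast
    from p_App(1)[unfolded M] obtain A' M0' where M': "M' = Lam A' M0'"
      by (auto elim: parLamE)
    from p_App(2)[unfolded M M'] have "par Ax Rl M0' (cd Ax Rl M0)"
      by (auto elim: parLamE)
    thus ?thesis using M M' p_App by (auto intro: par.p_beta)
  next
    case False
    show ?thesis
    proof (cases "\<exists>s. M = Cst (Eps s)")
      case True
      then obtain s where M: "M = Cst (Eps s)" by blast
      from p_App(1)[unfolded M] have M': "M' = M" using M by (auto elim: parCstE)
      show ?thesis
      proof (cases "\<exists>s1 s2. N = Cst (Dot s1 s2)")
        case True
        then obtain s1 s2 where N: "N = Cst (Dot s1 s2)" by blast
        from p_App(3)[unfolded N] have N': "N' = N" using N by (auto elim: parCstE)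
        show ?thesis using M M' N N' by (auto intro: par.intros)
      next
        case F2: False
        show ?thesis
        proof (cases "\<exists>s1 s2 s3 A B. N = App (App (Cst (PiC s1 s2 s3)) A) B")
          case True
          then obtain s1 s2 s3 A B where N: "N = App (App (Cst (PiC s1 s2 s3)) A) B" by blast
          from p_App(3)[unfolded N] obtain A' B' where N': "N' = App (App (Cst (PiC s1 s2 s3)) A') B'"
            by (auto elim!: parPiE2 parPiE1 parCstE)
          from p_App(4)[unfolded N N'] have ih: "par Ax Rl A' (cd Ax Rl A)" "par Ax Rl B' (cd Ax Rl B)"
            by (auto elim!: parPiE2 parPiE1 parCstE)
          show ?thesis using M M' N N' ih by (auto intro!: par.intros par_lift)
        next
          case False
          hence "cd Ax Rl (App M N) = App (cd Ax Rl M) (cd Ax Rl N)"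
            using F2 M by (intro cd_App_other) auto
          thus ?thesis using p_App by (auto intro: par.intros)
        qed
      qed
    next
      case F3: False
      hence "cd Ax Rl (App M N) = App (cd Ax Rl M) (cd Ax Rl N)"
        using False by (intro cd_App_other) auto
      thus ?thesis using p_App by (auto intro: par.intros)
    qed
  qed
next
  case (p_beta M M' N N' A)
  thus ?case by (simp add: par_subst)
next
  case (p_rl s1 s2 s3 A A' B B')
  thus ?case by (auto intro!: par.intros par_lift)
qed (auto intro: par.intros)

lemma par_diamond: "par Ax Rl M N1 \<Longrightarrow> par Ax Rl M N2 \<Longrightarrow> \<exists>P. par Ax Rl N1 P \<and> par Ax Rl N2 P"
  using par_cd by blast

lemma par_strip: "(par Ax Rl)\<^sup>*\<^sup>* M N1 \<Longrightarrow> par Ax Rl M N2 \<Longrightarrow> \<exists>P. par Ax Rl N1 P \<and> (par Ax Rl)\<^sup>*\<^sup>* N2 P"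
proof (induct arbitrary: N2 rule: rtranclp.induct)
  case (rtrancl_refl a) thus ?case by auto
next
  case (rtrancl_into_rtrancl a b c)
  then obtain P where "par Ax Rl b P" "(par Ax Rl)\<^sup>*\<^sup>* N2 P" by blast
  moreover obtain Q where "par Ax Rl c Q" "par Ax Rl P Q" using par_diamond rtrancl_into_rtrancl(3) \<open>par Ax Rl b P\<close> by blast
  ultimately show ?case by (auto intro: rtranclp.rtrancl_into_rtrancl)
qed

lemma par_confl0: "(par Ax Rl)\<^sup>*\<^sup>* M N2 \<Longrightarrow> (par Ax Rl)\<^sup>*\<^sup>* M N1 \<Longrightarrow> \<exists>P. (par Ax Rl)\<^sup>*\<^sup>* N1 P \<and> (par Ax Rl)\<^sup>*\<^sup>* N2 P"
proof (induct arbitrary: N1 rule: rtranclp.induct)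
  case (rtrancl_refl a) thus ?case by auto
next
  case (rtrancl_into_rtrancl a b c)
  then obtain P where P: "(par Ax Rl)\<^sup>*\<^sup>* N1 P" "(par Ax Rl)\<^sup>*\<^sup>* b P" by blast
  from par_strip[OF P(2) rtrancl_into_rtrancl(3)] obtain Q where "par Ax Rl P Q" "(par Ax Rl)\<^sup>*\<^sup>* c Q" by blast
  thus ?case using P by (auto intro: rtranclp.rtrancl_into_rtrancl)
qed

lemma par_confl: "(par Ax Rl)\<^sup>*\<^sup>* M N1 \<Longrightarrow> (par Ax Rl)\<^sup>*\<^sup>* M N2 \<Longrightarrow> \<exists>P. (par Ax Rl)\<^sup>*\<^sup>* N1 P \<and> (par Ax Rl)\<^sup>*\<^sup>* N2 P"
  using par_confl0 by blast

lemma rd_par: "rd Ax Rl M N \<Longrightarrow> par Ax Rl M N"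
proof (induct rule: ctxclos.induct)
  case (root M N)
  thus ?case
  proof
    assume "beta_root M N" thus ?thesis by (cases rule: beta_root.cases) (auto intro: par.intros)
  next
    assume "RS Ax Rl M N" thus ?thesis by (cases rule: RS.cases) (auto intro: par.intros)
  qed
qed (auto intro: par.intros)

lemma par_rds: "par Ax Rl M N \<Longrightarrow> rds Ax Rl M N"
proof (induct rule: par.induct)
  case (p_App M M' N N') thus ?case by (simp add: star_App)
next
  case (p_Lam M M' N N') thus ?case by (simp add: star_Lam)
next
  case (p_Prod M M' N N') thus ?case by (simp add: star_Prod)
next
  case (p_beta M M' N N' A)
  have "rds Ax Rl (App (Lam A M) N) (App (Lam A M') N')" using p_beta by (auto intro: star_App star_Lam)
  moreover have "rd Ax Rl (App (Lam A M') N') (subst M' 0 N')" by (auto intro: ctxclos.root beta_root.intros)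
  ultimately show ?case by auto
next
  case (p_ax s1 s2) thus ?case by (auto intro: ctxclos.root RS.intros)
next
  case (p_rl s1 s2 s3 A A' B B')
  have "rds Ax Rl (App (Cst (Eps s3)) (App (App (Cst (PiC s1 s2 s3)) A) B))
                  (App (Cst (Eps s3)) (App (App (Cst (PiC s1 s2 s3)) A') B'))"
    using p_rl by (auto intro!: star_App)
  moreover have "rd Ax Rl (App (Cst (Eps s3)) (App (App (Cst (PiC s1 s2 s3)) A') B'))
     (Prod (App (Cst (Eps s1)) A') (App (Cst (Eps s2)) (App (lift 0 B') (Var 0))))"
    using p_rl by (auto intro: ctxclos.root RS.intros)
  ultimately show ?case by auto
qed auto

lemma rds_pars: "rds Ax Rl M N \<longleftrightarrow> (par Ax Rl)\<^sup>*\<^sup>* M N"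
proof
  assume "rds Ax Rl M N" thus "(par Ax Rl)\<^sup>*\<^sup>* M N"
    by (induct rule: rtranclp.induct) (auto intro: rtranclp.rtrancl_into_rtrancl rd_par)
next
  assume "(par Ax Rl)\<^sup>*\<^sup>* M N" thus "rds Ax Rl M N"
    by (induct rule: rtranclp.induct) (auto intro: rtranclp_trans par_rds)
qed

lemma rds_confl: "rds Ax Rl M N1 \<Longrightarrow> rds Ax Rl M N2 \<Longrightarrow> \<exists>P. rds Ax Rl N1 P \<and> rds Ax Rl N2 P"
  unfolding rds_pars by (rule par_confl)

lemma church_rosser: "conv Ax Rl M N \<Longrightarrow> \<exists>P. rds Ax Rl M P \<and> rds Ax Rl N P"
  unfolding conv_betaR_def
proof (induct rule: rtranclp.induct)
  case (rtrancl_refl a) thus ?case by auto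
next
  case (rtrancl_into_rtrancl a b c)
  then obtain P where P: "rds Ax Rl a P" "rds Ax Rl b P" by blast
  from rtrancl_into_rtrancl(3) show ?case
  proof
    assume "rd Ax Rl b c"
    then obtain Q where "rds Ax Rl P Q" "rds Ax Rl c Q" using rds_confl[OF P(2), of c] by auto
    thus ?thesis using P by (auto intro: rtranclp_trans)
  next
    assume "rd Ax Rl c b" thus ?thesis using P by (auto intro: converse_rtranclp_into_rtranclp)
  qed
qed


inductive_cases rdTE: "ctxclos r TypeS N"
inductive_cases rdKE: "ctxclos r KindS N"
inductive_cases rdVarE: "ctxclos r (Var i) N"
inductive_cases rdCstE: "ctxclos r (Cst c) N"
inductive_cases rdProdE: "ctxclos r (Prod A B) N"
inductive_cases brE: "beta_root M N"
inductive_cases RSE: "RS Ax Rl M N"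

lemma rd_atom: "rd Ax Rl M N \<Longrightarrow> M = TypeS \<or> M = KindS \<or> M = Var i \<or> M = Cst c \<Longrightarrow> False"
  by (auto elim!: rdTE rdKE rdVarE rdCstE brE RSE)

lemma rds_atom: "rds Ax Rl M N \<Longrightarrow> M = TypeS \<or> M = KindS \<or> M = Var i \<or> M = Cst c \<Longrightarrow> N = M"
proof (induct rule: rtranclp.induct)
  case (rtrancl_into_rtrancl a b c)
  hence "rd Ax Rl a c" by simp
  thus ?case using rd_atom[of Ax Rl a c i] rtrancl_into_rtrancl(4) by blast
qed simp

lemma rd_Prod: "rd Ax Rl (Prod A B) N \<Longrightarrow> \<exists>A' B'. N = Prod A' B' \<and> rds Ax Rl A A' \<and> rds Ax Rl B B'"
  by (auto elim!: rdProdE brE RSE)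

lemma rds_Prod: "rds Ax Rl M N \<Longrightarrow> M = Prod A B \<Longrightarrow> \<exists>A' B'. N = Prod A' B' \<and> rds Ax Rl A A' \<and> rds Ax Rl B B'"
proof (induct arbitrary: A B rule: rtranclp.induct)
  case (rtrancl_into_rtrancl a b c)
  then obtain A' B' where "b = Prod A' B'" "rds Ax Rl A A'" "rds Ax Rl B B'" by blast
  moreover from rtrancl_into_rtrancl(3) this(1) obtain A'' B'' where "c = Prod A'' B''" "rds Ax Rl A' A''" "rds Ax Rl B' B''"
    using rd_Prod by blast
  ultimately show ?case by (blast intro: rtranclp_trans)
qed auto

lemma conv_Prod_inj: "conv Ax Rl (Prod A B) (Prod A' B') \<Longrightarrow> conv Ax Rl A A' \<and> conv Ax Rl B B'"
proof -
  assume "conv Ax Rl (Prod A B) (Prod A' B')"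
  then obtain P where P: "rds Ax Rl (Prod A B) P" "rds Ax Rl (Prod A' B') P" using church_rosser by blast
  obtain X Y where XY: "P = Prod X Y" "rds Ax Rl A X" "rds Ax Rl B Y" using rds_Prod[OF P(1)] by blast
  obtain X' Y' where XY': "P = Prod X' Y'" "rds Ax Rl A' X'" "rds Ax Rl B' Y'" using rds_Prod[OF P(2)] by blast
  have "X = X'" "Y = Y'" using XY XY' by auto
  hence "conv Ax Rl A X" "conv Ax Rl X A'" "conv Ax Rl B Y" "conv Ax Rl Y B'"
    using XY XY' rds_conv rds_conv' by auto
  thus ?thesis using conv_trans by blast
qed

lemma conv_atom_rds: "conv Ax Rl M N \<Longrightarrow> M = TypeS \<or> M = KindS \<or> M = Var i \<or> M = Cst cc \<Longrightarrow> rds Ax Rl N M"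
proof -
  assume a: "conv Ax Rl M N" and b: "M = TypeS \<or> M = KindS \<or> M = Var i \<or> M = Cst cc"
  then obtain P where P: "rds Ax Rl M P" "rds Ax Rl N P" using church_rosser by blast
  have "P = M" using rds_atom[OF P(1) b] .
  thus ?thesis using P by simp
qed

lemma conv_TK: "\<not> conv Ax Rl TypeS KindS"
proof
  assume "conv Ax Rl TypeS KindS"
  hence "rds Ax Rl KindS TypeS" using conv_atom_rds[of Ax Rl TypeS KindS] by blast
  from rds_atom[OF this] show False by simp
qed

lemma conv_KT: "\<not> conv Ax Rl KindS TypeS"
  using conv_TK conv_sym by blast

lemma conv_sort_Prod: "\<not> conv Ax Rl (Prod A B) s" if "s = TypeS \<or> s = KindS"
proof
  assume "conv Ax Rl (Prod A B) s"
  hence "conv Ax Rl s (Prod A B)" by (rule conv_sym)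
  hence "rds Ax Rl (Prod A B) s" using conv_atom_rds that by blast
  from rds_Prod[OF this HOL.refl] show False using that by auto
qed

lemma conv_sorts: "is_sort s \<Longrightarrow> is_sort s' \<Longrightarrow> conv Ax Rl s s' \<Longrightarrow> s = s'"
  using conv_TK conv_KT unfolding is_sort_def by auto

lemma conv_U: "conv Ax Rl (Cst (U s)) (Cst (U s')) \<Longrightarrow> s = s'"
proof -
  assume "conv Ax Rl (Cst (U s)) (Cst (U s'))"
  hence "rds Ax Rl (Cst (U s')) (Cst (U s))" using conv_atom_rds by blast
  from rds_atom[OF this] show ?thesis by simp
qed

lemma typ_wf: "typS Srt Ax Rl \<Gamma> M A \<Longrightarrow> wfS Srt Ax Rl \<Gamma>"
  by (induct rule: wf_ctx_has_type.inducts(2)[where ?P1.0="\<lambda>_. True"]) (auto intro: wf_ctx_has_type.intros)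

lemma wf_consE: "wfS Srt Ax Rl (A # \<Gamma>) \<Longrightarrow> \<exists>s. is_sort s \<and> typS Srt Ax Rl \<Gamma> A s"
  by (cases rule: wf_ctx.cases) auto

lemma gen_Prod: "typS Srt Ax Rl \<Gamma> M C \<Longrightarrow> M = Prod A B \<Longrightarrow>
   \<exists>s. typS Srt Ax Rl \<Gamma> A TypeS \<and> typS Srt Ax Rl (A # \<Gamma>) B s \<and> is_sort s \<and> conv Ax Rl s C"
proof (induct arbitrary: A B rule: wf_ctx_has_type.inducts(2)[where ?P1.0="\<lambda>_. True"])
  case (t_conv \<Gamma> M A B s) thus ?case by (metis conv_trans)
qed auto

lemma gen_Lam: "typS Srt Ax Rl \<Gamma> M C \<Longrightarrow> M = Lam A N \<Longrightarrow>
   \<exists>B s. typS Srt Ax Rl \<Gamma> (Prod A B) s \<and> is_sort s \<and> typS Srt Ax Rl (A # \<Gamma>) N B \<and> conv Ax Rl (Prod A B) C"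
proof (induct arbitrary: A N rule: wf_ctx_has_type.inducts(2)[where ?P1.0="\<lambda>_. True"])
  case (t_conv \<Gamma> M A B s) thus ?case by (metis conv_trans)
qed auto

lemma gen_App: "typS Srt Ax Rl \<Gamma> M C \<Longrightarrow> M = App P N \<Longrightarrow>
   \<exists>A B. typS Srt Ax Rl \<Gamma> P (Prod A B) \<and> typS Srt Ax Rl \<Gamma> N A \<and> conv Ax Rl (subst B 0 N) C"
proof (induct arbitrary: P N rule: wf_ctx_has_type.inducts(2)[where ?P1.0="\<lambda>_. True"])
  case (t_conv \<Gamma> M A B s) thus ?case by (metis conv_trans)
qed auto

lemma gen_Var: "typS Srt Ax Rl \<Gamma> M C \<Longrightarrow> M = Var i \<Longrightarrow>
   wfS Srt Ax Rl \<Gamma> \<and> i < length \<Gamma> \<and> conv Ax Rl (liftn (Suc i) (\<Gamma> ! i)) C"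
proof (induct arbitrary: i rule: wf_ctx_has_type.inducts(2)[where ?P1.0="\<lambda>_. True"])
  case (t_conv \<Gamma> M A B s) thus ?case by (metis conv_trans)
qed auto

lemma gen_Cst: "typS Srt Ax Rl \<Gamma> M C \<Longrightarrow> M = Cst c \<Longrightarrow>
   \<exists>A. sigS Srt Ax Rl c = Some A \<and> wfS Srt Ax Rl \<Gamma> \<and> conv Ax Rl A C"
proof (induct arbitrary: c rule: wf_ctx_has_type.inducts(2)[where ?P1.0="\<lambda>_. True"])
  case (t_conv \<Gamma> M A B s) thus ?case by (metis conv_trans)
qed auto

lemma gen_T: "typS Srt Ax Rl \<Gamma> M C \<Longrightarrow> M = TypeS \<Longrightarrow> wfS Srt Ax Rl \<Gamma> \<and> conv Ax Rl KindS C"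
proof (induct rule: wf_ctx_has_type.inducts(2)[where ?P1.0="\<lambda>_. True"])
  case (t_conv \<Gamma> M A B s) thus ?case by (metis conv_trans)
qed auto

lemma Kind_untyped: "typS Srt Ax Rl \<Gamma> M C \<Longrightarrow> M = KindS \<Longrightarrow> False"
  by (induct rule: wf_ctx_has_type.inducts(2)[where ?P1.0="\<lambda>_. True"]) auto

lemma sig_closed: "sigS Srt Ax Rl c = Some A \<Longrightarrow> lift k A = A \<and> subst A k N = A"
  by (cases c) (auto split: if_splits)


section \<open>Weakening\<close>

fun ins :: "nat \<Rightarrow> 'c trm \<Rightarrow> 'c trm list \<Rightarrow> 'c trm list" where
  "ins 0 C \<Gamma> = C # \<Gamma>"
| "ins (Suc k) C [] = [C]"
| "ins (Suc k) C (A # \<Gamma>) = lift k A # ins k C \<Gamma>"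

lemma lift0_lift: "lift (Suc k) (lift 0 t) = lift 0 (lift k t)"
  using lift_lift[of 0 k t] by simp

lemma lift_liftn_ge: "k \<le> n \<Longrightarrow> lift k (liftn n X) = liftn (Suc n) X"
proof (induct n arbitrary: k)
  case 0 thus ?case by (simp add: liftn_def)
next
  case (Suc n)
  show ?case
  proof (cases k)
    case 0 thus ?thesis by (simp add: liftn_Suc)
  next
    case (Suc k')
    hence "k' \<le> n" using Suc.prems by simp
    hence "lift k' (liftn n X) = liftn (Suc n) X" by (rule Suc.hyps)
    thus ?thesis using Suc by (simp only: liftn_Suc lift0_lift)
  qed
qed

lemma lift_liftn_lt: "lift (j + n) (liftn n X) = liftn n (lift j X)"
proof (induct n)
  case 0 thus ?case by simp
next
  case (Suc n)
  have "lift (j + Suc n) (liftn (Suc n) X) = lift (Suc (j + n)) (lift 0 (liftn n X))" by (simp add: liftn_Suc)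
  also have "\<dots> = lift 0 (lift (j + n) (liftn n X))" by (rule lift0_lift)
  finally show ?case using Suc by (simp add: liftn_Suc)
qed

lemma length_ins: "k \<le> length \<Gamma> \<Longrightarrow> length (ins k C \<Gamma>) = Suc (length \<Gamma>)"
  by (induct k C \<Gamma> rule: ins.induct) auto

lemma ins_nth_lt: "k \<le> length \<Gamma> \<Longrightarrow> i < k \<Longrightarrow> ins k C \<Gamma> ! i = lift (k - Suc i) (\<Gamma> ! i)"
  by (induct k C \<Gamma> arbitrary: i rule: ins.induct) (auto simp: nth_Cons split: nat.split)

lemma ins_nth_ge: "k \<le> length \<Gamma> \<Longrightarrow> k \<le> i \<Longrightarrow> ins k C \<Gamma> ! Suc i = \<Gamma> ! i"
  by (induct k C \<Gamma> arbitrary: i rule: ins.induct) (auto simp: nth_Cons split: nat.split)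

lemma sort_lift [simp]: "is_sort s \<Longrightarrow> lift k s = s" by (auto simp: is_sort_def)
lemma sort_subst [simp]: "is_sort s \<Longrightarrow> subst s k N = s" by (auto simp: is_sort_def)
lemma liftn_T [simp]: "liftn n TypeS = TypeS" by (induct n) (auto simp: liftn_Suc)
lemma liftn_K [simp]: "liftn n KindS = KindS" by (induct n) (auto simp: liftn_Suc)
lemma sort_liftn [simp]: "is_sort s \<Longrightarrow> liftn n s = s" by (auto simp: is_sort_def)

lemma weakening:
  "typS Srt Ax Rl \<Gamma> M A \<Longrightarrow> k \<le> length \<Gamma> \<Longrightarrow> wfS Srt Ax Rl (ins k C \<Gamma>) \<Longrightarrow>
   typS Srt Ax Rl (ins k C \<Gamma>) (lift k M) (lift k A)"
proof (induct arbitrary: k rule: wf_ctx_has_type.inducts(2)[where ?P1.0="\<lambda>_. True"])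
  case (t_ax \<Gamma>) thus ?case by (auto intro: wf_ctx_has_type.intros)
next
  case (t_var \<Gamma> i)
  show ?case
  proof (cases "i < k")
    case True
    have "k = (k - Suc i) + Suc i" using True by simp
    hence e: "lift k (liftn (Suc i) (\<Gamma> ! i)) = liftn (Suc i) (lift (k - Suc i) (\<Gamma> ! i))"
      by (metis lift_liftn_lt)
    have "typS Srt Ax Rl (ins k C \<Gamma>) (Var i) (liftn (Suc i) (ins k C \<Gamma> ! i))"
      using t_var True length_ins[of k \<Gamma> C] by (intro wf_ctx_has_type.t_var) auto
    thus ?thesis using True e ins_nth_lt[of k \<Gamma> i C] t_var by simp
  next
    case False
    have e: "lift k (liftn (Suc i) (\<Gamma> ! i)) = liftn (Suc (Suc i)) (\<Gamma> ! i)"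
      using False by (intro lift_liftn_ge) simp
    have "typS Srt Ax Rl (ins k C \<Gamma>) (Var (Suc i)) (liftn (Suc (Suc i)) (ins k C \<Gamma> ! Suc i))"
      using t_var False length_ins[of k \<Gamma> C] by (intro wf_ctx_has_type.t_var) auto
    thus ?thesis using False e ins_nth_ge[of k \<Gamma> i C] t_var by simp
  qed
next
  case (t_cst \<Gamma> c A)
  thus ?case using sig_closed[OF t_cst(3)] by (auto intro: wf_ctx_has_type.t_cst)
next
  case (t_prod \<Gamma> A B s)
  have a: "typS Srt Ax Rl (ins k C \<Gamma>) (lift k A) TypeS" using t_prod by simp
  hence w: "wfS Srt Ax Rl (ins (Suc k) C (A # \<Gamma>))" by (auto intro: wf_cons simp: is_sort_def)
  have "typS Srt Ax Rl (ins (Suc k) C (A # \<Gamma>)) (lift (Suc k) B) (lift (Suc k) s)"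
    using t_prod(4)[OF _ w] t_prod(6) by simp
  hence "typS Srt Ax Rl (lift k A # ins k C \<Gamma>) (lift (Suc k) B) s" using t_prod(5) by simp
  thus ?case using a t_prod(5) by (auto intro: wf_ctx_has_type.t_prod)
next
  case (t_lam \<Gamma> A B s M)
  have p: "typS Srt Ax Rl (ins k C \<Gamma>) (Prod (lift k A) (lift (Suc k) B)) s" using t_lam by simp
  then obtain s' where "typS Srt Ax Rl (ins k C \<Gamma>) (lift k A) TypeS" using gen_Prod by blast
  hence w: "wfS Srt Ax Rl (ins (Suc k) C (A # \<Gamma>))" by (auto intro: wf_cons simp: is_sort_def)
  have "typS Srt Ax Rl (ins (Suc k) C (A # \<Gamma>)) (lift (Suc k) M) (lift (Suc k) B)"
    using t_lam(5)[OF _ w] t_lam(6) by simp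
  hence "typS Srt Ax Rl (lift k A # ins k C \<Gamma>) (lift (Suc k) M) (lift (Suc k) B)" by simp
  thus ?case using p t_lam(3) by (auto intro: wf_ctx_has_type.t_lam)
next
  case (t_app \<Gamma> M A B N)
  have "typS Srt Ax Rl (ins k C \<Gamma>) (App (lift k M) (lift k N)) (subst (lift (Suc k) B) 0 (lift k N))"
    using t_app by (intro wf_ctx_has_type.t_app) auto
  thus ?case by simp
next
  case (t_conv \<Gamma> M A B s)
  thus ?case by (auto intro: wf_ctx_has_type.t_conv conv_lift)
qed auto

lemma weak0: "typS Srt Ax Rl \<Gamma> M A \<Longrightarrow> typS Srt Ax Rl \<Gamma> C s \<Longrightarrow> is_sort s \<Longrightarrow>
   typS Srt Ax Rl (C # \<Gamma>) (lift 0 M) (lift 0 A)"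
  using weakening[of Srt Ax Rl \<Gamma> M A 0 C] by (auto intro: wf_cons)

lemma wf_drop: "wfS Srt Ax Rl (\<Delta> @ \<Gamma>) \<Longrightarrow> wfS Srt Ax Rl \<Gamma>"
  by (induct \<Delta>) (auto dest: wf_consE typ_wf)

lemma weakn: "wfS Srt Ax Rl (\<Delta> @ \<Gamma>) \<Longrightarrow> typS Srt Ax Rl \<Gamma> M A \<Longrightarrow>
   typS Srt Ax Rl (\<Delta> @ \<Gamma>) (liftn (length \<Delta>) M) (liftn (length \<Delta>) A)"
proof (induct \<Delta>)
  case Nil thus ?case by simp
next
  case (Cons D \<Delta>)
  obtain s where s: "is_sort s" "typS Srt Ax Rl (\<Delta> @ \<Gamma>) D s" using wf_consE Cons(2) by fastforce
  hence "typS Srt Ax Rl (\<Delta> @ \<Gamma>) (liftn (length \<Delta>) M) (liftn (length \<Delta>) A)"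
    using Cons typ_wf by blast
  thus ?case using weak0 s by (simp add: liftn_Suc)
qed

lemma sig_typed:
  assumes ps: "pts_spec Srt Ax Rl" and wf: "wfS Srt Ax Rl \<Gamma>" and c: "sigS Srt Ax Rl c = Some A"
  shows "\<exists>s. is_sort s \<and> typS Srt Ax Rl \<Gamma> A s"
proof -
  have U: "\<And>\<Gamma> s. wfS Srt Ax Rl \<Gamma> \<Longrightarrow> s \<in> Srt \<Longrightarrow> typS Srt Ax Rl \<Gamma> (Cst (U s)) TypeS"
    by (rule wf_ctx_has_type.t_cst) auto
  have sT: "is_sort TypeS" by (simp add: is_sort_def)
  have sK: "is_sort KindS" by (simp add: is_sort_def)
  show ?thesis
  proof (cases c)
    case (U s)
    thus ?thesis using c wf by (auto split: if_splits intro!: exI[of _ KindS] sK wf_ctx_has_type.t_ax)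
  next
    case (Eps s)
    hence A: "A = Prod (Cst (U s)) TypeS" "s \<in> Srt" using c by (auto split: if_splits)
    have u: "typS Srt Ax Rl \<Gamma> (Cst (U s)) TypeS" using U wf A by blast
    have "typS Srt Ax Rl (Cst (U s) # \<Gamma>) TypeS KindS"
      using u sT by (auto intro!: wf_ctx_has_type.t_ax wf_cons)
    thus ?thesis using u A sK by (auto intro!: exI[of _ KindS] wf_ctx_has_type.t_prod)
  next
    case (Dot s1 s2)
    hence A: "A = Cst (U s2)" "(s1, s2) \<in> Ax" using c by (auto split: if_splits)
    hence "s2 \<in> Srt" using ps unfolding pts_spec_def by blast
    thus ?thesis using A U wf sT by blast
  next
    case (PiC s1 s2 s3)
    hence A: "A = Prod (Cst (U s1)) (Prod (Prod (App (Cst (Eps s1)) (Var 0)) (Cst (U s2))) (Cst (U s3)))"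
      "(s1, s2, s3) \<in> Rl" using c by (auto split: if_splits)
    hence S: "s1 \<in> Srt" "s2 \<in> Srt" "s3 \<in> Srt" using ps unfolding pts_spec_def by blast+
    define G1 where "G1 = Cst (U s1) # \<Gamma>"
    have u1: "typS Srt Ax Rl \<Gamma> (Cst (U s1)) TypeS" using U wf S by blast
    have w1: "wfS Srt Ax Rl G1" unfolding G1_def using u1 sT by (rule wf_cons)
    have e1: "typS Srt Ax Rl G1 (Cst (Eps s1)) (Prod (Cst (U s1)) TypeS)"
      using w1 S by (auto intro: wf_ctx_has_type.t_cst)
    have v0: "typS Srt Ax Rl G1 (Var 0) (Cst (U s1))"
      using wf_ctx_has_type.t_var[OF w1, of 0] by (simp add: G1_def liftn_def)
    have E: "typS Srt Ax Rl G1 (App (Cst (Eps s1)) (Var 0)) TypeS"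
      using wf_ctx_has_type.t_app[OF e1 v0] by simp
    have w2: "wfS Srt Ax Rl (App (Cst (Eps s1)) (Var 0) # G1)" using E sT by (rule wf_cons)
    have P1: "typS Srt Ax Rl G1 (Prod (App (Cst (Eps s1)) (Var 0)) (Cst (U s2))) TypeS"
      using E U[OF w2 S(2)] sT by (rule wf_ctx_has_type.t_prod)
    have w3: "wfS Srt Ax Rl (Prod (App (Cst (Eps s1)) (Var 0)) (Cst (U s2)) # G1)" using P1 sT by (rule wf_cons)
    have P2: "typS Srt Ax Rl G1 (Prod (Prod (App (Cst (Eps s1)) (Var 0)) (Cst (U s2))) (Cst (U s3))) TypeS"
      using P1 U[OF w3 S(3)] sT by (rule wf_ctx_has_type.t_prod)
    have "typS Srt Ax Rl \<Gamma> A TypeS" unfolding A using u1 P2[unfolded G1_def] sT by (rule wf_ctx_has_type.t_prod)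
    thus ?thesis using sT by blast
  qed
qed

section \<open>Substitution\<close>

fun sctx :: "nat \<Rightarrow> 'c trm \<Rightarrow> 'c trm list \<Rightarrow> 'c trm list" where
  "sctx 0 N (A # \<Gamma>) = \<Gamma>"
| "sctx (Suc k) N (A # \<Gamma>) = subst A k (liftn k N) # sctx k N \<Gamma>"
| "sctx k N [] = []"

lemma length_sctx: "k < length \<Gamma> \<Longrightarrow> length (sctx k N \<Gamma>) = length \<Gamma> - 1"
  by (induct k N \<Gamma> rule: sctx.induct) auto

lemma sctx_nth_lt: "k < length \<Gamma> \<Longrightarrow> i < k \<Longrightarrow>
   sctx k N \<Gamma> ! i = subst (\<Gamma> ! i) (k - Suc i) (liftn (k - Suc i) N)"
  by (induct k N \<Gamma> arbitrary: i rule: sctx.induct) (auto simp: nth_Cons split: nat.split)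

lemma sctx_nth_ge: "k < length \<Gamma> \<Longrightarrow> k \<le> i \<Longrightarrow> sctx k N \<Gamma> ! i = \<Gamma> ! Suc i"
  by (induct k N \<Gamma> arbitrary: i rule: sctx.induct) (auto simp: nth_Cons split: nat.split)

lemma sctx_append: "k < length \<Gamma> \<Longrightarrow> \<exists>\<Delta>. sctx k N \<Gamma> = \<Delta> @ drop (Suc k) \<Gamma> \<and> length \<Delta> = k"
proof (induct k N \<Gamma> rule: sctx.induct)
  case (2 k N A \<Gamma>)
  then obtain \<Delta> where "sctx k N \<Gamma> = \<Delta> @ drop (Suc k) \<Gamma> \<and> length \<Delta> = k" by auto
  thus ?case by (auto intro!: exI[of _ "subst A k (liftn k N) # \<Delta>"])
qed auto

lemma subst_liftn: "subst (liftn n X) (j + n) (liftn (j + n) N) = liftn n (subst X j (liftn j N))"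
proof (induct n)
  case 0 thus ?case by simp
next
  case (Suc n)
  have "subst (liftn (Suc n) X) (j + Suc n) (liftn (j + Suc n) N)
      = subst (lift 0 (liftn n X)) (Suc (j + n)) (lift 0 (liftn (j + n) N))"
    by (simp add: liftn_Suc)
  also have "\<dots> = lift 0 (subst (liftn n X) (j + n) (liftn (j + n) N))"
    using lift_subst_lt[of 0 "j+n" "liftn n X" "liftn (j + n) N"] by simp
  finally show ?case using Suc by (simp add: liftn_Suc)
qed

lemma substitution:
  "typS Srt Ax Rl \<Gamma> M B \<Longrightarrow> k < length \<Gamma> \<Longrightarrow> typS Srt Ax Rl (drop (Suc k) \<Gamma>) N (\<Gamma> ! k) \<Longrightarrow>
   wfS Srt Ax Rl (sctx k N \<Gamma>) \<Longrightarrow>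
   typS Srt Ax Rl (sctx k N \<Gamma>) (subst M k (liftn k N)) (subst B k (liftn k N))"
proof (induct arbitrary: k rule: wf_ctx_has_type.inducts(2)[where ?P1.0="\<lambda>_. True"])
  case (t_ax \<Gamma>) thus ?case by (auto intro: wf_ctx_has_type.intros)
next
  case (t_var \<Gamma> i)
  consider "i < k" | "i = k" | "k < i" by arith
  thus ?case
  proof cases
    case 1
    have "k = (k - Suc i) + Suc i" using 1 by simp
    hence e: "subst (liftn (Suc i) (\<Gamma> ! i)) k (liftn k N) = liftn (Suc i) (subst (\<Gamma> ! i) (k - Suc i) (liftn (k - Suc i) N))"
      by (metis subst_liftn)
    have "typS Srt Ax Rl (sctx k N \<Gamma>) (Var i) (liftn (Suc i) (sctx k N \<Gamma> ! i))"
      using t_var 1 length_sctx[of k \<Gamma> N] by (intro wf_ctx_has_type.t_var) auto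
    thus ?thesis using 1 e sctx_nth_lt[of k \<Gamma> i N] t_var by simp
  next
    case 2
    obtain \<Delta> where D: "sctx k N \<Gamma> = \<Delta> @ drop (Suc k) \<Gamma>" "length \<Delta> = k" using sctx_append t_var by blast
    have "typS Srt Ax Rl (sctx k N \<Gamma>) (liftn k N) (liftn k (\<Gamma> ! k))"
      using weakn[of Srt Ax Rl \<Delta> "drop (Suc k) \<Gamma>" N "\<Gamma> ! k"] D t_var by simp
    moreover have "liftn (Suc k) (\<Gamma> ! k) = lift k (liftn k (\<Gamma> ! k))" by (rule sym, rule lift_liftn_ge) simp
    ultimately show ?thesis using 2 by simp
  next
    case 3
    have "typS Srt Ax Rl (sctx k N \<Gamma>) (Var (i - 1)) (liftn (Suc (i - 1)) (sctx k N \<Gamma> ! (i - 1)))"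
      using t_var 3 length_sctx[of k \<Gamma> N] by (intro wf_ctx_has_type.t_var) auto
    moreover have "liftn (Suc i) (\<Gamma> ! i) = lift k (liftn i (\<Gamma> ! i))" by (metis 3 less_imp_le lift_liftn_ge)
    moreover have "sctx k N \<Gamma> ! (i - 1) = \<Gamma> ! i" using sctx_nth_ge[of k \<Gamma> "i - 1" N] 3 t_var by simp
    ultimately show ?thesis using 3 by simp
  qed
next
  case (t_cst \<Gamma> c A)
  thus ?case using sig_closed[OF t_cst(3)] by (auto intro: wf_ctx_has_type.t_cst)
next
  case (t_prod \<Gamma> A B s)
  have a: "typS Srt Ax Rl (sctx k N \<Gamma>) (subst A k (liftn k N)) TypeS" using t_prod by simp
  hence w: "wfS Srt Ax Rl (sctx (Suc k) N (A # \<Gamma>))" by (auto intro: wf_cons simp: is_sort_def)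
  have "typS Srt Ax Rl (sctx (Suc k) N (A # \<Gamma>)) (subst B (Suc k) (liftn (Suc k) N)) (subst s (Suc k) (liftn (Suc k) N))"
    using t_prod(4)[OF _ _ w] t_prod(6,7) by simp
  hence "typS Srt Ax Rl (subst A k (liftn k N) # sctx k N \<Gamma>) (subst B (Suc k) (lift 0 (liftn k N))) s"
    using t_prod(5) by (simp add: liftn_Suc)
  thus ?case using a t_prod(5) by (auto intro: wf_ctx_has_type.t_prod)
next
  case (t_lam \<Gamma> A B s M)
  have p: "typS Srt Ax Rl (sctx k N \<Gamma>) (Prod (subst A k (liftn k N)) (subst B (Suc k) (lift 0 (liftn k N)))) s"
    using t_lam by simp
  then obtain s' where "typS Srt Ax Rl (sctx k N \<Gamma>) (subst A k (liftn k N)) TypeS" using gen_Prod by blast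
  hence w: "wfS Srt Ax Rl (sctx (Suc k) N (A # \<Gamma>))" by (auto intro: wf_cons simp: is_sort_def)
  have "typS Srt Ax Rl (sctx (Suc k) N (A # \<Gamma>)) (subst M (Suc k) (liftn (Suc k) N)) (subst B (Suc k) (liftn (Suc k) N))"
    using t_lam(5)[OF _ _ w] t_lam(6,7) by simp
  hence "typS Srt Ax Rl (subst A k (liftn k N) # sctx k N \<Gamma>) (subst M (Suc k) (lift 0 (liftn k N))) (subst B (Suc k) (lift 0 (liftn k N)))"
    by (simp add: liftn_Suc)
  thus ?case using p t_lam(3) by (auto intro: wf_ctx_has_type.t_lam)
next
  case (t_app \<Gamma> M A B N0)
  have "typS Srt Ax Rl (sctx k N \<Gamma>) (App (subst M k (liftn k N)) (subst N0 k (liftn k N)))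
      (subst (subst B (Suc k) (lift 0 (liftn k N))) 0 (subst N0 k (liftn k N)))"
    using t_app by (intro wf_ctx_has_type.t_app) auto
  thus ?case using subst_subst[of 0 k B "liftn k N" N0] by simp
next
  case (t_conv \<Gamma> M A B s)
  thus ?case by (auto intro: wf_ctx_has_type.t_conv conv_subst)
qed auto

lemma subst0: "typS Srt Ax Rl (A # \<Gamma>) M B \<Longrightarrow> typS Srt Ax Rl \<Gamma> N A \<Longrightarrow>
   typS Srt Ax Rl \<Gamma> (subst M 0 N) (subst B 0 N)"
  using substitution[of Srt Ax Rl "A # \<Gamma>" M B 0 N] typ_wf[of Srt Ax Rl \<Gamma> N A] by simp


lemma sortT: "is_sort TypeS" and sortK: "is_sort KindS" by (auto simp: is_sort_def)

lemma wf_var_typed: "wfS Srt Ax Rl \<Gamma> \<Longrightarrow> i < length \<Gamma> \<Longrightarrow>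
   \<exists>s. is_sort s \<and> typS Srt Ax Rl \<Gamma> (liftn (Suc i) (\<Gamma> ! i)) s"
proof -
  assume wf: "wfS Srt Ax Rl \<Gamma>" and i: "i < length \<Gamma>"
  have "wfS Srt Ax Rl (drop i \<Gamma>)" using wf_drop[of Srt Ax Rl "take i \<Gamma>" "drop i \<Gamma>"] wf by simp
  moreover have "drop i \<Gamma> = \<Gamma> ! i # drop (Suc i) \<Gamma>" using i by (simp add: Cons_nth_drop_Suc)
  ultimately obtain s where s: "is_sort s" "typS Srt Ax Rl (drop (Suc i) \<Gamma>) (\<Gamma> ! i) s"
    using wf_consE by metis
  have "\<Gamma> = take (Suc i) \<Gamma> @ drop (Suc i) \<Gamma>" by simp
  hence "typS Srt Ax Rl \<Gamma> (liftn (length (take (Suc i) \<Gamma>)) (\<Gamma> ! i)) (liftn (length (take (Suc i) \<Gamma>)) s)"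
    using weakn[of Srt Ax Rl "take (Suc i) \<Gamma>" "drop (Suc i) \<Gamma>" "\<Gamma> ! i" s] wf s by simp
  moreover have "length (take (Suc i) \<Gamma>) = Suc i" using i by simp
  ultimately show ?thesis using s by (metis sort_liftn)
qed

lemma type_correct:
  assumes ps: "pts_spec Srt Ax Rl"
  shows "typS Srt Ax Rl \<Gamma> M A \<Longrightarrow> A = KindS \<or> (\<exists>s. is_sort s \<and> typS Srt Ax Rl \<Gamma> A s)"
proof (induct rule: wf_ctx_has_type.inducts(2)[where ?P1.0="\<lambda>_. True"])
  case (t_var \<Gamma> i) thus ?case using wf_var_typed by blast
next
  case (t_cst \<Gamma> c A) thus ?case using sig_typed[OF ps] by blast
next
  case (t_prod \<Gamma> A B s)
  thus ?case using typ_wf[OF t_prod(1)] sortK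
    by (auto simp: is_sort_def intro: wf_ctx_has_type.t_ax)
next
  case (t_app \<Gamma> M A B N)
  then obtain s where "typS Srt Ax Rl \<Gamma> (Prod A B) s" by auto
  then obtain s' where s': "typS Srt Ax Rl (A # \<Gamma>) B s'" "is_sort s'" using gen_Prod by blast
  have "typS Srt Ax Rl \<Gamma> (subst B 0 N) (subst s' 0 N)" using subst0[OF s'(1) t_app(3)] .
  thus ?case using s' by auto
qed auto

lemma subst_lift_var: "subst (lift (Suc k) M) k (Var k) = M"
  by (induct M arbitrary: k) auto

lemma ctx_conv:
  assumes t: "typS Srt Ax Rl (A # \<Gamma>) M B" and a: "typS Srt Ax Rl \<Gamma> A' s'" "is_sort s'"
    and c: "conv Ax Rl A A'"
  shows "typS Srt Ax Rl (A' # \<Gamma>) M B"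
proof -
  obtain s where s: "is_sort s" "typS Srt Ax Rl \<Gamma> A s" using wf_consE typ_wf[OF t] by blast
  have w1: "wfS Srt Ax Rl (A' # \<Gamma>)" using a by (rule wf_cons)
  have la: "typS Srt Ax Rl (A' # \<Gamma>) (lift 0 A) s" using weak0[OF s(2) a] s by simp
  have w2: "wfS Srt Ax Rl (ins 1 A' (A # \<Gamma>))" using la s by (simp add: wf_cons)
  have t1: "typS Srt Ax Rl (lift 0 A # A' # \<Gamma>) (lift 1 M) (lift 1 B)"
    using weakening[OF t _ w2] by simp
  have v: "typS Srt Ax Rl (A' # \<Gamma>) (Var 0) (lift 0 A')"
    using wf_ctx_has_type.t_var[OF w1, of 0] by (simp add: liftn_def)
  have v': "typS Srt Ax Rl (A' # \<Gamma>) (Var 0) (lift 0 A)"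
    using v la s(1) conv_lift[OF conv_sym[OF c]] by (rule wf_ctx_has_type.t_conv)
  have "typS Srt Ax Rl (A' # \<Gamma>) (subst (lift 1 M) 0 (Var 0)) (subst (lift 1 B) 0 (Var 0))"
    using subst0[OF t1 v'] .
  moreover have e: "\<And>X. subst (lift 1 X) 0 (Var 0) = X" using subst_lift_var[of 0] by simp
  ultimately show ?thesis by (simp only: e)
qed

lemma typ_subst_type:
  assumes ps: "pts_spec Srt Ax Rl" and M: "typS Srt Ax Rl \<Gamma> M (Prod A B)" and N: "typS Srt Ax Rl \<Gamma> N A"
  shows "\<exists>s. is_sort s \<and> typS Srt Ax Rl \<Gamma> (subst B 0 N) s"
proof -
  obtain s where "typS Srt Ax Rl \<Gamma> (Prod A B) s" using type_correct[OF ps M] by auto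
  then obtain s' where s': "typS Srt Ax Rl (A # \<Gamma>) B s'" "is_sort s'" using gen_Prod by blast
  show ?thesis using subst0[OF s'(1) N] s' by auto
qed


inductive_cases rdAppE: "ctxclos r (App M N) X"
inductive_cases rdLamE: "ctxclos r (Lam M N) X"

lemma sigS_Eps: "sigS Srt Ax Rl (Eps s) = Some T \<Longrightarrow> T = Prod (Cst (U s)) TypeS \<and> s \<in> Srt"
  by (auto split: if_splits)

lemma sigS_PiC: "sigS Srt Ax Rl (PiC s1 s2 s3) = Some T \<Longrightarrow>
  T = Prod (Cst (U s1)) (Prod (Prod (App (Cst (Eps s1)) (Var 0)) (Cst (U s2))) (Cst (U s3))) \<and> (s1, s2, s3) \<in> Rl"
  by (auto split: if_splits)

lemma SR_rl:
  assumes ps: "pts_spec Srt Ax Rl" and rl: "(s1, s2, s3) \<in> Rl"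
    and N: "typS Srt Ax Rl \<Gamma> (App (App (Cst (PiC s1 s2 s3)) A1) B1) A"
  shows "typS Srt Ax Rl \<Gamma> (Prod (App (Cst (Eps s1)) A1) (App (Cst (Eps s2)) (App (lift 0 B1) (Var 0)))) TypeS"
proof -
  have S: "s1 \<in> Srt" "s2 \<in> Srt" "s3 \<in> Srt" using ps rl unfolding pts_spec_def by blast+
  have wf: "wfS Srt Ax Rl \<Gamma>" using typ_wf[OF N] .
  obtain A2 B2 where AB2: "typS Srt Ax Rl \<Gamma> (App (Cst (PiC s1 s2 s3)) A1) (Prod A2 B2)" "typS Srt Ax Rl \<Gamma> B1 A2"
    using gen_App[OF N] by blast
  obtain A3 B3 where AB3: "typS Srt Ax Rl \<Gamma> (Cst (PiC s1 s2 s3)) (Prod A3 B3)" "typS Srt Ax Rl \<Gamma> A1 A3"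
     "conv Ax Rl (subst B3 0 A1) (Prod A2 B2)"
    using gen_App[OF AB2(1)] by blast
  obtain T where T: "sigS Srt Ax Rl (PiC s1 s2 s3) = Some T" "conv Ax Rl T (Prod A3 B3)"
    using gen_Cst[OF AB3(1)] by blast
  have T': "T = Prod (Cst (U s1)) (Prod (Prod (App (Cst (Eps s1)) (Var 0)) (Cst (U s2))) (Cst (U s3)))"
    using sigS_PiC[OF T(1)] by simp
  have c3: "conv Ax Rl (Cst (U s1)) A3" "conv Ax Rl (Prod (Prod (App (Cst (Eps s1)) (Var 0)) (Cst (U s2))) (Cst (U s3))) B3"
    using conv_Prod_inj[OF T(2)[unfolded T']] by auto
  have "conv Ax Rl (subst (Prod (Prod (App (Cst (Eps s1)) (Var 0)) (Cst (U s2))) (Cst (U s3))) 0 A1) (subst B3 0 A1)"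
    using conv_subst[OF c3(2)] .
  hence "conv Ax Rl (Prod (Prod (App (Cst (Eps s1)) A1) (Cst (U s2))) (Cst (U s3))) (Prod A2 B2)"
    using AB3(3) conv_trans by simp
  hence c2: "conv Ax Rl (Prod (App (Cst (Eps s1)) A1) (Cst (U s2))) A2" using conv_Prod_inj by blast
  have U: "\<And>\<Gamma> s. wfS Srt Ax Rl \<Gamma> \<Longrightarrow> s \<in> Srt \<Longrightarrow> typS Srt Ax Rl \<Gamma> (Cst (U s)) TypeS"
    by (rule wf_ctx_has_type.t_cst) auto
  have A1: "typS Srt Ax Rl \<Gamma> A1 (Cst (U s1))"
    using AB3(2) U[OF wf S(1)] sortT conv_sym[OF c3(1)] by (rule wf_ctx_has_type.t_conv)
  have e1: "typS Srt Ax Rl \<Gamma> (Cst (Eps s1)) (Prod (Cst (U s1)) TypeS)"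
    using wf S by (auto intro: wf_ctx_has_type.t_cst)
  have E1: "typS Srt Ax Rl \<Gamma> (App (Cst (Eps s1)) A1) TypeS"
    using wf_ctx_has_type.t_app[OF e1 A1] by simp
  define G1 where "G1 = App (Cst (Eps s1)) A1 # \<Gamma>"
  have w1: "wfS Srt Ax Rl G1" unfolding G1_def using E1 sortT by (rule wf_cons)
  have P: "typS Srt Ax Rl \<Gamma> (Prod (App (Cst (Eps s1)) A1) (Cst (U s2))) TypeS"
    using E1 U[OF w1[unfolded G1_def] S(2)] sortT by (rule wf_ctx_has_type.t_prod)
  have B1: "typS Srt Ax Rl \<Gamma> B1 (Prod (App (Cst (Eps s1)) A1) (Cst (U s2)))"
    using AB2(2) P sortT conv_sym[OF c2] by (rule wf_ctx_has_type.t_conv)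
  have lB: "typS Srt Ax Rl G1 (lift 0 B1) (Prod (App (Cst (Eps s1)) (lift 0 A1)) (Cst (U s2)))"
    using weak0[OF B1 E1 sortT] unfolding G1_def by simp
  have v: "typS Srt Ax Rl G1 (Var 0) (App (Cst (Eps s1)) (lift 0 A1))"
    using wf_ctx_has_type.t_var[OF w1, of 0] by (simp add: liftn_def G1_def)
  have ap: "typS Srt Ax Rl G1 (App (lift 0 B1) (Var 0)) (Cst (U s2))"
    using wf_ctx_has_type.t_app[OF lB v] by simp
  have e2: "typS Srt Ax Rl G1 (Cst (Eps s2)) (Prod (Cst (U s2)) TypeS)"
    using w1 S by (auto intro: wf_ctx_has_type.t_cst)
  have "typS Srt Ax Rl G1 (App (Cst (Eps s2)) (App (lift 0 B1) (Var 0))) TypeS"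
    using wf_ctx_has_type.t_app[OF e2 ap] by simp
  thus ?thesis using E1 sortT unfolding G1_def by (auto intro: wf_ctx_has_type.t_prod)
qed


lemma rd_Prod_cases: "rd Ax Rl (Prod A B) X \<Longrightarrow> (\<exists>A'. X = Prod A' B \<and> rd Ax Rl A A') \<or> (\<exists>B'. X = Prod A B' \<and> rd Ax Rl B B')"
  by (erule rdProdE) (auto elim: brE RSE)

lemma rd_Lam_cases: "rd Ax Rl (Lam A B) X \<Longrightarrow> (\<exists>A'. X = Lam A' B \<and> rd Ax Rl A A') \<or> (\<exists>B'. X = Lam A B' \<and> rd Ax Rl B B')"
  by (erule rdLamE) (auto elim: brE RSE)

lemma rd_App_cases: "rd Ax Rl (App A B) X \<Longrightarrow> (beta_root (App A B) X \<or> RS Ax Rl (App A B) X) \<or>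
   (\<exists>A'. X = App A' B \<and> rd Ax Rl A A') \<or> (\<exists>B'. X = App A B' \<and> rd Ax Rl B B')"
  by (erule rdAppE) auto

lemma SR:
  assumes ps: "pts_spec Srt Ax Rl"
  shows "typS Srt Ax Rl \<Gamma> M C \<Longrightarrow> rd Ax Rl M M' \<Longrightarrow> typS Srt Ax Rl \<Gamma> M' C"
proof (induct arbitrary: M' rule: wf_ctx_has_type.inducts(2)[where ?P1.0="\<lambda>_. True"])
  case (t_ax \<Gamma>) thus ?case using rd_atom by blast
next
  case (t_var \<Gamma> i) thus ?case using rd_atom by blast
next
  case (t_cst \<Gamma> c A) thus ?case using rd_atom by blast
next
  case (t_prod \<Gamma> A B s)
  from rd_Prod_cases[OF t_prod(6)] show ?case
  proof (elim disjE exE conjE)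
    fix A' assume prodL: "M' = Prod A' B" "rd Ax Rl A A'"
    have a': "typS Srt Ax Rl \<Gamma> A' TypeS" using t_prod(2) prodL by blast
    have "typS Srt Ax Rl (A' # \<Gamma>) B s" using ctx_conv[OF t_prod(3) a' sortT rd_conv[OF prodL(2)]] .
    thus ?thesis using a' t_prod(5) prodL by (auto intro: wf_ctx_has_type.t_prod)
  next
    fix B' assume prodR: "M' = Prod A B'" "rd Ax Rl B B'"
    thus ?thesis using t_prod by (auto intro: wf_ctx_has_type.t_prod)
  qed
next
  case (t_lam \<Gamma> A B s M)
  from rd_Lam_cases[OF t_lam(6)] show ?case
  proof (elim disjE exE conjE)
    fix A' assume lamL: "M' = Lam A' M" "rd Ax Rl A A'"
    have p: "typS Srt Ax Rl \<Gamma> (Prod A' B) s" using t_lam(2) lamL by (auto intro: ctxclos.prodL)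
    then obtain s1 where a': "typS Srt Ax Rl \<Gamma> A' TypeS" using gen_Prod by blast
    have "typS Srt Ax Rl (A' # \<Gamma>) M B" using ctx_conv[OF t_lam(4) a' sortT rd_conv[OF lamL(2)]] .
    hence "typS Srt Ax Rl \<Gamma> (Lam A' M) (Prod A' B)" using p t_lam(3) by (auto intro: wf_ctx_has_type.t_lam)
    moreover have "conv Ax Rl (Prod A' B) (Prod A B)" using conv_sym[OF rd_conv[OF lamL(2)]] by (rule conv_ProdL)
    ultimately show ?thesis using t_lam(1,3) lamL(1) by (auto intro: wf_ctx_has_type.t_conv)
  next
    fix M2 assume lamR: "M' = Lam A M2" "rd Ax Rl M M2"
    thus ?thesis using t_lam by (auto intro: wf_ctx_has_type.t_lam)
  qed
next
  case (t_app \<Gamma> M A B N)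
  obtain sB where sB: "is_sort sB" "typS Srt Ax Rl \<Gamma> (subst B 0 N) sB"
    using typ_subst_type[OF ps t_app(1,3)] by blast
  from rd_App_cases[OF t_app(5)] show ?case
  proof (elim disjE exE conjE)
      assume "beta_root (App M N) M'"
      then obtain A0 T where MT: "M = Lam A0 T" "M' = subst T 0 N" by (auto elim: brE)
      obtain B0 s0 where L: "typS Srt Ax Rl \<Gamma> (Prod A0 B0) s0" "typS Srt Ax Rl (A0 # \<Gamma>) T B0"
        "conv Ax Rl (Prod A0 B0) (Prod A B)" using gen_Lam[OF t_app(1)[unfolded MT(1)]] by blast
      have c: "conv Ax Rl A0 A" "conv Ax Rl B0 B" using conv_Prod_inj[OF L(3)] by auto
      obtain s1 where a0: "typS Srt Ax Rl \<Gamma> A0 TypeS" using gen_Prod[OF L(1)] by blast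
      have n: "typS Srt Ax Rl \<Gamma> N A0" using t_app(3) a0 sortT conv_sym[OF c(1)] by (rule wf_ctx_has_type.t_conv)
      have "typS Srt Ax Rl \<Gamma> (subst T 0 N) (subst B0 0 N)" using subst0[OF L(2) n] .
      thus ?thesis using MT sB conv_subst[OF c(2)] by (auto intro: wf_ctx_has_type.t_conv)
    next
      assume "RS Ax Rl (App M N) M'"
      thus ?thesis
      proof (cases rule: RS.cases)
        case (r_ax s1 s2)
        obtain T where T: "sigS Srt Ax Rl (Eps s2) = Some T" "conv Ax Rl T (Prod A B)"
          using gen_Cst[OF t_app(1)[unfolded r_ax(1)]] by blast
        have "conv Ax Rl TypeS B" using conv_Prod_inj[OF T(2)[unfolded sigS_Eps[OF T(1), THEN conjunct1]]] by simp
        hence cB: "conv Ax Rl TypeS (subst B 0 N)" using conv_subst[of Ax Rl TypeS B 0 N] by simp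
        have "s1 \<in> Srt" using ps r_ax(4) unfolding pts_spec_def by blast
        hence "typS Srt Ax Rl \<Gamma> (Cst (U s1)) TypeS" using typ_wf[OF t_app(1)]
          by (auto intro: wf_ctx_has_type.t_cst)
        thus ?thesis using r_ax sB cB by (auto intro: wf_ctx_has_type.t_conv)
      next
        case (r_rl s1 s2 s3 A1 B1)
        obtain T where T: "sigS Srt Ax Rl (Eps s3) = Some T" "conv Ax Rl T (Prod A B)"
          using gen_Cst[OF t_app(1)[unfolded r_rl(1)]] by blast
        have "conv Ax Rl TypeS B" using conv_Prod_inj[OF T(2)[unfolded sigS_Eps[OF T(1), THEN conjunct1]]] by simp
        hence cB: "conv Ax Rl TypeS (subst B 0 N)" using conv_subst[of Ax Rl TypeS B 0 N] by simp
        have "typS Srt Ax Rl \<Gamma> M' TypeS" using SR_rl[OF ps r_rl(4) t_app(3)[unfolded r_rl(2)]] r_rl(3) by simp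
        thus ?thesis using sB cB by (auto intro: wf_ctx_has_type.t_conv)
      qed
  next
    fix M2 assume appL: "M' = App M2 N" "rd Ax Rl M M2"
    thus ?thesis using t_app by (auto intro: wf_ctx_has_type.t_app)
  next
    fix N2 assume appR: "M' = App M N2" "rd Ax Rl N N2"
    have "typS Srt Ax Rl \<Gamma> (App M N2) (subst B 0 N2)" using t_app appR by (auto intro: wf_ctx_has_type.t_app)
    moreover have "conv Ax Rl (subst B 0 N2) (subst B 0 N)" using conv_subst2[OF conv_sym[OF rd_conv[OF appR(2)]]] .
    ultimately show ?thesis using appR sB by (auto intro: wf_ctx_has_type.t_conv)
  qed
next
  case (t_conv \<Gamma> M A B s)
  thus ?case by (auto intro: wf_ctx_has_type.t_conv)
qed auto

lemma SRs:
  assumes ps: "pts_spec Srt Ax Rl"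
  shows "rds Ax Rl M M' \<Longrightarrow> typS Srt Ax Rl \<Gamma> M C \<Longrightarrow> typS Srt Ax Rl \<Gamma> M' C"
  by (induct rule: rtranclp.induct) (auto intro: SR[OF ps])


lemma uniqueness:
  "typS Srt Ax Rl \<Gamma> M A \<Longrightarrow> typS Srt Ax Rl \<Gamma> M B \<Longrightarrow> conv Ax Rl A B"
proof (induct arbitrary: B rule: wf_ctx_has_type.inducts(2)[where ?P1.0="\<lambda>_. True"])
  case (t_ax \<Gamma> C) thus ?case using gen_T by blast
next
  case (t_var \<Gamma> i C) thus ?case using gen_Var by blast
next
  case (t_cst \<Gamma> c A C)
  then obtain A' where "sigS Srt Ax Rl c = Some A'" "conv Ax Rl A' C" using gen_Cst by blast
  thus ?case using t_cst(3) by simp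
next
  case (t_prod \<Gamma> A B s C)
  obtain s' where "typS Srt Ax Rl (A # \<Gamma>) B s'" "conv Ax Rl s' C" using gen_Prod[OF t_prod(6)] by blast
  thus ?case using t_prod(4) conv_trans[of Ax Rl s s' C] by blast
next
  case (t_lam \<Gamma> A B s M C)
  obtain B' s' where b: "typS Srt Ax Rl (A # \<Gamma>) M B'" "conv Ax Rl (Prod A B') C" using gen_Lam[OF t_lam(6)] by blast
  have "conv Ax Rl (Prod A B) (Prod A B')" using t_lam(5)[OF b(1)] by (rule conv_ProdR)
  thus ?case using b(2) by (rule conv_trans)
next
  case (t_app \<Gamma> M A B N C)
  obtain A' B' where a: "typS Srt Ax Rl \<Gamma> M (Prod A' B')" "conv Ax Rl (subst B' 0 N) C" using gen_App[OF t_app(5)] by blast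
  have "conv Ax Rl B B'" using conv_Prod_inj[OF t_app(2)[OF a(1)]] by blast
  hence "conv Ax Rl (subst B 0 N) (subst B' 0 N)" by (rule conv_subst)
  thus ?case using a(2) by (rule conv_trans)
next
  case (t_conv \<Gamma> M A B s C)
  have "conv Ax Rl A C" using t_conv(2)[OF t_conv(7)] .
  thus ?case using conv_sym[OF t_conv(6)] by (rule conv_trans[rotated])
qed simp_all

lemma F2:
  assumes ps: "pts_spec Srt Ax Rl"
    and X: "typS Srt Ax Rl \<Gamma> X TypeS" and Y: "typS Srt Ax Rl \<Gamma> Y KindS" and c: "conv Ax Rl X Y"
  shows False
proof -
  obtain P where P: "rds Ax Rl X P" "rds Ax Rl Y P" using church_rosser[OF c] by blast
  have "typS Srt Ax Rl \<Gamma> P TypeS" using SRs[OF ps P(1) X] .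
  moreover have "typS Srt Ax Rl \<Gamma> P KindS" using SRs[OF ps P(2) Y] .
  ultimately show False using uniqueness conv_TK by blast
qed


section \<open>Syntactic level classification\<close>

datatype lvl = LK | LF | LO

fun cst_fam :: "'s cst \<Rightarrow> bool" where
  "cst_fam (U s) = True"
| "cst_fam (Eps s) = True"
| "cst_fam (Dot s1 s2) = False"
| "cst_fam (PiC s1 s2 s3) = False"

lemma sig_exact:
  assumes ps: "pts_spec Srt Ax Rl" and wf: "wfS Srt Ax Rl \<Gamma>" and c: "sigS Srt Ax Rl c = Some A"
  shows "typS Srt Ax Rl \<Gamma> A (if cst_fam c then KindS else TypeS)"
proof -
  have U: "\<And>\<Gamma> s. wfS Srt Ax Rl \<Gamma> \<Longrightarrow> s \<in> Srt \<Longrightarrow> typS Srt Ax Rl \<Gamma> (Cst (U s)) TypeS"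
    by (rule wf_ctx_has_type.t_cst) auto
  have sT: "is_sort TypeS" by (simp add: is_sort_def)
  have sK: "is_sort KindS" by (simp add: is_sort_def)
  show ?thesis
  proof (cases c)
    case (U s)
    thus ?thesis using c wf by (auto split: if_splits intro!: wf_ctx_has_type.t_ax)
  next
    case (Eps s)
    hence A: "A = Prod (Cst (U s)) TypeS" "s \<in> Srt" using c by (auto split: if_splits)
    have u: "typS Srt Ax Rl \<Gamma> (Cst (U s)) TypeS" using U wf A by blast
    have "typS Srt Ax Rl (Cst (U s) # \<Gamma>) TypeS KindS"
      using u sT by (auto intro!: wf_ctx_has_type.t_ax wf_cons)
    thus ?thesis using u A sK Eps by (auto intro!: wf_ctx_has_type.t_prod)
  next
    case (Dot s1 s2)
    hence A: "A = Cst (U s2)" "(s1, s2) \<in> Ax" using c by (auto split: if_splits)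
    hence "s2 \<in> Srt" using ps unfolding pts_spec_def by blast
    thus ?thesis using A U wf sT Dot by simp
  next
    case (PiC s1 s2 s3)
    hence A: "A = Prod (Cst (U s1)) (Prod (Prod (App (Cst (Eps s1)) (Var 0)) (Cst (U s2))) (Cst (U s3)))"
      "(s1, s2, s3) \<in> Rl" using c by (auto split: if_splits)
    hence S: "s1 \<in> Srt" "s2 \<in> Srt" "s3 \<in> Srt" using ps unfolding pts_spec_def by blast+
    define G1 where "G1 = Cst (U s1) # \<Gamma>"
    have u1: "typS Srt Ax Rl \<Gamma> (Cst (U s1)) TypeS" using U wf S by blast
    have w1: "wfS Srt Ax Rl G1" unfolding G1_def using u1 sT by (rule wf_cons)
    have e1: "typS Srt Ax Rl G1 (Cst (Eps s1)) (Prod (Cst (U s1)) TypeS)"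
      using w1 S by (auto intro: wf_ctx_has_type.t_cst)
    have v0: "typS Srt Ax Rl G1 (Var 0) (Cst (U s1))"
      using wf_ctx_has_type.t_var[OF w1, of 0] by (simp add: G1_def liftn_def)
    have E: "typS Srt Ax Rl G1 (App (Cst (Eps s1)) (Var 0)) TypeS"
      using wf_ctx_has_type.t_app[OF e1 v0] by simp
    have w2: "wfS Srt Ax Rl (App (Cst (Eps s1)) (Var 0) # G1)" using E sT by (rule wf_cons)
    have P1: "typS Srt Ax Rl G1 (Prod (App (Cst (Eps s1)) (Var 0)) (Cst (U s2))) TypeS"
      using E U[OF w2 S(2)] sT by (rule wf_ctx_has_type.t_prod)
    have w3: "wfS Srt Ax Rl (Prod (App (Cst (Eps s1)) (Var 0)) (Cst (U s2)) # G1)" using P1 sT by (rule wf_cons)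
    have P2: "typS Srt Ax Rl G1 (Prod (Prod (App (Cst (Eps s1)) (Var 0)) (Cst (U s2))) (Cst (U s3))) TypeS"
      using P1 U[OF w3 S(3)] sT by (rule wf_ctx_has_type.t_prod)
    have "typS Srt Ax Rl \<Gamma> A TypeS" unfolding A using u1 P2[unfolded G1_def] sT by (rule wf_ctx_has_type.t_prod)
    thus ?thesis using PiC by simp
  qed
qed

fun cls :: "bool list \<Rightarrow> 's cst trm \<Rightarrow> lvl" where
  "cls L TypeS = LK"
| "cls L KindS = LK"
| "cls L (Var i) = (if i < length L \<and> L ! i then LF else LO)"
| "cls L (Cst c) = (if cst_fam c then LF else LO)"
| "cls L (App M N) = cls L M"
| "cls L (Lam A M) = cls ((cls L A = LK) # L) M"
| "cls L (Prod A B) = (if cls ((cls L A = LK) # L) B = LK then LK else LF)"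

fun lv :: "'s cst trm list \<Rightarrow> bool list" where
  "lv [] = []"
| "lv (A # \<Gamma>) = (cls (lv \<Gamma>) A = LK) # lv \<Gamma>"

lemma length_lv [simp]: "length (lv \<Gamma>) = length \<Gamma>"
  by (induct \<Gamma>) auto

lemma drop_lv: "drop n (lv \<Gamma>) = lv (drop n \<Gamma>)"
  by (induct \<Gamma> arbitrary: n) (auto simp: drop_Cons split: nat.split)

lemma lv_nth: "i < length \<Gamma> \<Longrightarrow> lv \<Gamma> ! i = (cls (lv (drop (Suc i) \<Gamma>)) (\<Gamma> ! i) = LK)"
  by (induct \<Gamma> arbitrary: i) (auto simp: nth_Cons split: nat.split)

lemma TT_false: "typS Srt Ax Rl \<Gamma> X TypeS \<Longrightarrow> typS Srt Ax Rl \<Gamma> X KindS \<Longrightarrow> False"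
  using uniqueness conv_TK by blast

lemma TypeS_TypeS: "typS Srt Ax Rl \<Gamma> TypeS TypeS \<Longrightarrow> False"
proof -
  assume a: "typS Srt Ax Rl \<Gamma> TypeS TypeS"
  have "typS Srt Ax Rl \<Gamma> TypeS KindS" using typ_wf[OF a] by (rule wf_ctx_has_type.t_ax)
  thus False using TT_false a by blast
qed

definition ctx_ok where
  "ctx_ok Srt Ax Rl \<Gamma> \<longleftrightarrow> (\<forall>i < length \<Gamma>. lv \<Gamma> ! i = typS Srt Ax Rl (drop (Suc i) \<Gamma>) (\<Gamma> ! i) KindS)"

definition tri where
  "tri Srt Ax Rl \<Gamma> M C \<longleftrightarrow>
     (cls (lv \<Gamma>) M = LK \<and> C = KindS) \<or> (cls (lv \<Gamma>) M = LF \<and> typS Srt Ax Rl \<Gamma> C KindS) \<or>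
     (cls (lv \<Gamma>) M = LO \<and> typS Srt Ax Rl \<Gamma> C TypeS)"

lemma sort_cases: "is_sort s \<Longrightarrow> (s = TypeS \<Longrightarrow> P) \<Longrightarrow> (s = KindS \<Longrightarrow> P) \<Longrightarrow> P"
  by (auto simp: is_sort_def)

lemma soundness:
  assumes ps: "pts_spec Srt Ax Rl"
  shows "typS Srt Ax Rl \<Gamma> M C \<Longrightarrow> ctx_ok Srt Ax Rl \<Gamma> \<and> tri Srt Ax Rl \<Gamma> M C"
proof (induct rule: wf_ctx_has_type.inducts(2)[where ?P1.0="ctx_ok Srt Ax Rl"])
  case wf_nil thus ?case by (simp add: ctx_ok_def)
next
  case (wf_cons \<Gamma> A s)
  have h0: "(cls (lv \<Gamma>) A = LK) = typS Srt Ax Rl \<Gamma> A KindS"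
  proof -
    from wf_cons(2) have "tri Srt Ax Rl \<Gamma> A s" by simp
    thus ?thesis unfolding tri_def
    proof (elim disjE conjE)
      assume "cls (lv \<Gamma>) A = LK" "s = KindS" thus ?thesis using wf_cons(1) by simp
    next
      assume a: "cls (lv \<Gamma>) A = LF" "typS Srt Ax Rl \<Gamma> s KindS"
      hence "s = TypeS" using wf_cons(3) Kind_untyped unfolding is_sort_def by blast
      thus ?thesis using a wf_cons(1) TT_false by auto
    next
      assume a: "cls (lv \<Gamma>) A = LO" "typS Srt Ax Rl \<Gamma> s TypeS"
      thus ?thesis using wf_cons(3) Kind_untyped TypeS_TypeS unfolding is_sort_def by blast
    qed
  qed
  from wf_cons(2) have "ctx_ok Srt Ax Rl \<Gamma>" by simp
  thus ?case using h0 unfolding ctx_ok_def by (auto simp: nth_Cons split: nat.split)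
next
  case (t_ax \<Gamma>) thus ?case by (simp add: tri_def)
next
  case (t_var \<Gamma> i)
  obtain s where s: "is_sort s" "typS Srt Ax Rl (drop (Suc i) \<Gamma>) (\<Gamma> ! i) s"
  proof -
    have "wfS Srt Ax Rl (drop i \<Gamma>)" using wf_drop[of Srt Ax Rl "take i \<Gamma>" "drop i \<Gamma>"] t_var(1) by simp
    moreover have "drop i \<Gamma> = \<Gamma> ! i # drop (Suc i) \<Gamma>" using t_var(3) by (simp add: Cons_nth_drop_Suc)
    ultimately show ?thesis using wf_consE that by metis
  qed
  have split: "\<Gamma> = take (Suc i) \<Gamma> @ drop (Suc i) \<Gamma>" and len: "length (take (Suc i) \<Gamma>) = Suc i"
    using t_var(3) by auto
  have W: "\<And>t. typS Srt Ax Rl (drop (Suc i) \<Gamma>) (\<Gamma> ! i) t \<Longrightarrow> typS Srt Ax Rl \<Gamma> (liftn (Suc i) (\<Gamma> ! i)) (liftn (Suc i) t)"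
    using weakn[of Srt Ax Rl "take (Suc i) \<Gamma>" "drop (Suc i) \<Gamma>"] t_var(1) split len by metis
  have ok: "lv \<Gamma> ! i = typS Srt Ax Rl (drop (Suc i) \<Gamma>) (\<Gamma> ! i) KindS"
    using t_var(2,3) unfolding ctx_ok_def by blast
  show ?case
  proof (cases "lv \<Gamma> ! i")
    case True
    hence "typS Srt Ax Rl \<Gamma> (liftn (Suc i) (\<Gamma> ! i)) KindS" using ok W by fastforce
    thus ?thesis using True t_var by (simp add: tri_def)
  next
    case False
    hence "s = TypeS" using ok s unfolding is_sort_def by blast
    hence "typS Srt Ax Rl \<Gamma> (liftn (Suc i) (\<Gamma> ! i)) TypeS" using W s by fastforce
    thus ?thesis using False t_var by (simp add: tri_def)
  qed
next
  case (t_cst \<Gamma> c A)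
  have "typS Srt Ax Rl \<Gamma> A (if cst_fam c then KindS else TypeS)" using sig_exact[OF ps t_cst(1,3)] .
  thus ?case using t_cst by (auto simp: tri_def)
next
  case (t_prod \<Gamma> A B s)
  have ok: "ctx_ok Srt Ax Rl \<Gamma>" using t_prod(2) by simp
  have tB: "tri Srt Ax Rl (A # \<Gamma>) B s" using t_prod(4) by simp
  have wf: "wfS Srt Ax Rl \<Gamma>" using typ_wf[OF t_prod(1)] .
  from tB[unfolded tri_def] show ?case
  proof (elim disjE conjE)
    assume "cls (lv (A # \<Gamma>)) B = LK" "s = KindS" thus ?thesis using ok by (simp add: tri_def)
  next
    assume a: "cls (lv (A # \<Gamma>)) B = LF" "typS Srt Ax Rl (A # \<Gamma>) s KindS"
    hence "s = TypeS" using t_prod(5) Kind_untyped unfolding is_sort_def by blast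
    thus ?thesis using a ok wf by (auto simp: tri_def intro: wf_ctx_has_type.t_ax)
  next
    assume a: "cls (lv (A # \<Gamma>)) B = LO" "typS Srt Ax Rl (A # \<Gamma>) s TypeS"
    thus ?thesis using t_prod(5) Kind_untyped TypeS_TypeS unfolding is_sort_def by blast
  qed
next
  case (t_lam \<Gamma> A B s M)
  have ok: "ctx_ok Srt Ax Rl \<Gamma>" using t_lam(2) by simp
  have tM: "tri Srt Ax Rl (A # \<Gamma>) M B" using t_lam(5) by simp
  obtain s' where a: "typS Srt Ax Rl \<Gamma> A TypeS" "typS Srt Ax Rl (A # \<Gamma>) B s'" using gen_Prod[OF t_lam(1)] by blast
  from tM[unfolded tri_def] show ?case
  proof (elim disjE conjE)
    assume "cls (lv (A # \<Gamma>)) M = LK" "B = KindS"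
    thus ?thesis using a Kind_untyped by blast
  next
    assume b: "cls (lv (A # \<Gamma>)) M = LF" "typS Srt Ax Rl (A # \<Gamma>) B KindS"
    have "typS Srt Ax Rl \<Gamma> (Prod A B) KindS" using a(1) b(2) sortK by (rule wf_ctx_has_type.t_prod)
    thus ?thesis using b ok by (simp add: tri_def)
  next
    assume b: "cls (lv (A # \<Gamma>)) M = LO" "typS Srt Ax Rl (A # \<Gamma>) B TypeS"
    have "typS Srt Ax Rl \<Gamma> (Prod A B) TypeS" using a(1) b(2) sortT by (rule wf_ctx_has_type.t_prod)
    thus ?thesis using b ok by (simp add: tri_def)
  qed
next
  case (t_app \<Gamma> M A B N)
  have ok: "ctx_ok Srt Ax Rl \<Gamma>" using t_app(2) by simp
  have tM: "tri Srt Ax Rl \<Gamma> M (Prod A B)" using t_app(2) by simp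
  from tM[unfolded tri_def] show ?case
  proof (elim disjE conjE)
    assume "cls (lv \<Gamma>) M = LK" "Prod A B = KindS" thus ?thesis by simp
  next
    assume b: "cls (lv \<Gamma>) M = LF" "typS Srt Ax Rl \<Gamma> (Prod A B) KindS"
    then obtain s' where "typS Srt Ax Rl (A # \<Gamma>) B s'" "is_sort s'" "conv Ax Rl s' KindS" using gen_Prod by blast
    hence "typS Srt Ax Rl (A # \<Gamma>) B KindS" using conv_sorts[OF _ sortK] by blast
    hence "typS Srt Ax Rl \<Gamma> (subst B 0 N) KindS" using subst0[OF _ t_app(3)] by fastforce
    thus ?thesis using b ok by (simp add: tri_def)
  next
    assume b: "cls (lv \<Gamma>) M = LO" "typS Srt Ax Rl \<Gamma> (Prod A B) TypeS"
    then obtain s' where "typS Srt Ax Rl (A # \<Gamma>) B s'" "is_sort s'" "conv Ax Rl s' TypeS" using gen_Prod by blast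
    hence "typS Srt Ax Rl (A # \<Gamma>) B TypeS" using conv_sorts[OF _ sortT] by blast
    hence "typS Srt Ax Rl \<Gamma> (subst B 0 N) TypeS" using subst0[OF _ t_app(3)] by fastforce
    thus ?thesis using b ok by (simp add: tri_def)
  qed
next
  case (t_conv \<Gamma> M A B s)
  have ok: "ctx_ok Srt Ax Rl \<Gamma>" using t_conv(2) by simp
  have tM: "tri Srt Ax Rl \<Gamma> M A" using t_conv(2) by simp
  from tM[unfolded tri_def] show ?case
  proof (elim disjE conjE)
    assume "cls (lv \<Gamma>) M = LK" "A = KindS"
    hence "rds Ax Rl B KindS" using conv_atom_rds t_conv(6) by blast
    hence "typS Srt Ax Rl \<Gamma> KindS s" using SRs[OF ps] t_conv(3) by blast
    thus ?thesis using Kind_untyped by blast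
  next
    assume b: "cls (lv \<Gamma>) M = LF" "typS Srt Ax Rl \<Gamma> A KindS"
    have "s = KindS"
    proof (rule ccontr)
      assume "s \<noteq> KindS" hence "s = TypeS" using t_conv(5) unfolding is_sort_def by blast
      thus False using F2[OF ps _ b(2) conv_sym[OF t_conv(6)]] t_conv(3) by blast
    qed
    thus ?thesis using b ok t_conv(3) by (simp add: tri_def)
  next
    assume b: "cls (lv \<Gamma>) M = LO" "typS Srt Ax Rl \<Gamma> A TypeS"
    have "s = TypeS"
    proof (rule ccontr)
      assume "s \<noteq> TypeS" hence "s = KindS" using t_conv(5) unfolding is_sort_def by blast
      thus False using F2[OF ps b(2) _ t_conv(6)] t_conv(3) by blast
    qed
    thus ?thesis using b ok t_conv(3) by (simp add: tri_def)
  qed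
qed


fun fr :: "bool list \<Rightarrow> 's cst trm \<Rightarrow> bool" where
  "fr L (App M N) = (((\<exists>B C. M = Lam B C) \<and> cls L M = LF) \<or> fr L M \<or> fr L N)"
| "fr L (Lam A M) = (fr L A \<or> fr ((cls L A = LK) # L) M)"
| "fr L (Prod A M) = (fr L A \<or> fr ((cls L A = LK) # L) M)"
| "fr L TypeS = False"
| "fr L KindS = False"
| "fr L (Var i) = False"
| "fr L (Cst c) = False"

definition insb :: "nat \<Rightarrow> bool \<Rightarrow> bool list \<Rightarrow> bool list" where
  "insb k b L = take k L @ b # drop k L"

definition del :: "nat \<Rightarrow> bool list \<Rightarrow> bool list" where
  "del k L = take k L @ drop (Suc k) L"

lemma insb_Suc [simp]: "insb (Suc k) b (x # L) = x # insb k b L" by (simp add: insb_def)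
lemma insb_0 [simp]: "insb 0 b L = b # L" by (simp add: insb_def)
lemma del_Suc [simp]: "del (Suc k) (x # L) = x # del k L" by (simp add: del_def)
lemma del_0 [simp]: "del 0 (x # L) = L" by (simp add: del_def)

lemma insb_var_lt: "k \<le> length L \<Longrightarrow> i < k \<Longrightarrow> (i < length (insb k b L) \<and> insb k b L ! i) = (i < length L \<and> L ! i)"
  by (auto simp: insb_def nth_append)

lemma insb_var_ge: "k \<le> length L \<Longrightarrow> k \<le> i \<Longrightarrow> (Suc i < length (insb k b L) \<and> insb k b L ! Suc i) = (i < length L \<and> L ! i)"
  by (auto simp: insb_def nth_append Suc_diff_le)

lemma cls_lift: "k \<le> length L \<Longrightarrow> cls (insb k b L) (lift k M) = cls L M"
proof (induct M arbitrary: k L)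
  case (Var i) thus ?case using insb_var_lt[of k L i b] insb_var_ge[of k L i b] by auto
next
  case (Lam A M)
  have "cls (insb k b L) (lift k A) = cls L A" using Lam by blast
  moreover have "cls (insb (Suc k) b ((cls L A = LK) # L)) (lift (Suc k) M) = cls ((cls L A = LK) # L) M"
    using Lam(2)[of "Suc k" "(cls L A = LK) # L"] Lam(3) by simp
  ultimately show ?case by simp
next
  case (Prod A M)
  have "cls (insb k b L) (lift k A) = cls L A" using Prod by blast
  moreover have "cls (insb (Suc k) b ((cls L A = LK) # L)) (lift (Suc k) M) = cls ((cls L A = LK) # L) M"
    using Prod(2)[of "Suc k" "(cls L A = LK) # L"] Prod(3) by simp
  ultimately show ?case by simp
qed auto

lemma lift_Lam_iff: "(\<exists>B C. lift k M = Lam B C) = (\<exists>B C. M = Lam B C)"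
  by (cases M) auto

lemma fr_lift: "k \<le> length L \<Longrightarrow> fr (insb k b L) (lift k M) = fr L M"
proof (induct M arbitrary: k L)
  case (App M1 M2) thus ?case using cls_lift[of k L b M1] lift_Lam_iff[of k M1] by simp
next
  case (Lam A M)
  have "fr (insb k b L) (lift k A) = fr L A" "cls (insb k b L) (lift k A) = cls L A" using Lam cls_lift by blast+
  moreover have "fr (insb (Suc k) b ((cls L A = LK) # L)) (lift (Suc k) M) = fr ((cls L A = LK) # L) M"
    using Lam(2)[of "Suc k" "(cls L A = LK) # L"] Lam(3) by simp
  ultimately show ?case by simp
next
  case (Prod A M)
  have "fr (insb k b L) (lift k A) = fr L A" "cls (insb k b L) (lift k A) = cls L A" using Prod cls_lift by blast+
  moreover have "fr (insb (Suc k) b ((cls L A = LK) # L)) (lift (Suc k) M) = fr ((cls L A = LK) # L) M"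
    using Prod(2)[of "Suc k" "(cls L A = LK) # L"] Prod(3) by simp
  ultimately show ?case by simp
qed auto

lemma del_var_lt: "k < length L \<Longrightarrow> i < k \<Longrightarrow> (i < length (del k L) \<and> del k L ! i) = (i < length L \<and> L ! i)"
  by (auto simp: del_def nth_append)

lemma del_var_gt: "k < length L \<Longrightarrow> k < i \<Longrightarrow> (i - 1 < length (del k L) \<and> del k L ! (i - 1)) = (i < length L \<and> L ! i)"
  by (auto simp: del_def nth_append)

lemma cls_subst: "k < length L \<Longrightarrow> \<not> L ! k \<Longrightarrow> cls (del k L) N = LO \<Longrightarrow> cls (del k L) (subst M k N) = cls L M"
proof (induct M arbitrary: k L N)
  case (Var i)
  consider "i < k" | "i = k" | "k < i" by arith
  thus ?case
  proof cases
    case 1 thus ?thesis using del_var_lt[OF Var(1) 1] by simp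
  next
    case 2 thus ?thesis using Var by simp
  next
    case 3 thus ?thesis using del_var_gt[OF Var(1) 3] by simp
  qed
next
  case (Lam A M)
  have a: "cls (del k L) (subst A k N) = cls L A" using Lam by blast
  have n: "cls ((cls L A = LK) # del k L) (lift 0 N) = LO" using cls_lift[of 0 "del k L" "cls L A = LK" N] Lam(5) by simp
  have "cls (del (Suc k) ((cls L A = LK) # L)) (subst M (Suc k) (lift 0 N)) = cls ((cls L A = LK) # L) M"
    using Lam(2)[of "Suc k" "(cls L A = LK) # L" "lift 0 N"] Lam(3,4) n by simp
  thus ?case using a by simp
next
  case (Prod A M)
  have a: "cls (del k L) (subst A k N) = cls L A" using Prod by blast
  have n: "cls ((cls L A = LK) # del k L) (lift 0 N) = LO" using cls_lift[of 0 "del k L" "cls L A = LK" N] Prod(5) by simp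
  have "cls (del (Suc k) ((cls L A = LK) # L)) (subst M (Suc k) (lift 0 N)) = cls ((cls L A = LK) # L) M"
    using Prod(2)[of "Suc k" "(cls L A = LK) # L" "lift 0 N"] Prod(3,4) n by simp
  thus ?case using a by simp
qed auto

lemma subst_Lam: "subst M k N = Lam B C \<Longrightarrow> M = Var k \<or> (\<exists>B' C'. M = Lam B' C')"
  by (cases M) (auto split: if_splits)

lemma fr_subst: "k < length L \<Longrightarrow> \<not> L ! k \<Longrightarrow> cls (del k L) N = LO \<Longrightarrow> \<not> fr L M \<Longrightarrow> \<not> fr (del k L) N \<Longrightarrow>
   \<not> fr (del k L) (subst M k N)"
proof (induct M arbitrary: k L N)
  case (App M1 M2)
  have c: "cls (del k L) (subst M1 k N) = cls L M1" using cls_subst App(3,4,5) by blast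
  have h: "\<not> ((\<exists>B C. subst M1 k N = Lam B C) \<and> cls L M1 = LF)"
  proof
    assume a: "(\<exists>B C. subst M1 k N = Lam B C) \<and> cls L M1 = LF"
    then obtain B C where "subst M1 k N = Lam B C" by blast
    hence "M1 = Var k \<or> (\<exists>B' C'. M1 = Lam B' C')" by (rule subst_Lam)
    thus False using a App(4,6) by auto
  qed
  show ?case using App h c by simp
next
  case (Lam A M)
  have a: "cls (del k L) (subst A k N) = cls L A" using cls_subst Lam(3,4,5) by blast
  have n: "cls ((cls L A = LK) # del k L) (lift 0 N) = LO" using cls_lift[of 0 "del k L" "cls L A = LK" N] Lam(5) by simp
  have n2: "\<not> fr ((cls L A = LK) # del k L) (lift 0 N)" using fr_lift[of 0 "del k L" "cls L A = LK" N] Lam(7) by simp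
  have "\<not> fr (del (Suc k) ((cls L A = LK) # L)) (subst M (Suc k) (lift 0 N))"
    using Lam(2)[of "Suc k" "(cls L A = LK) # L" "lift 0 N"] Lam(3,4,6) n n2 by simp
  moreover have "\<not> fr (del k L) (subst A k N)" using Lam by simp
  ultimately show ?case using a by simp
next
  case (Prod A M)
  have a: "cls (del k L) (subst A k N) = cls L A" using cls_subst Prod(3,4,5) by blast
  have n: "cls ((cls L A = LK) # del k L) (lift 0 N) = LO" using cls_lift[of 0 "del k L" "cls L A = LK" N] Prod(5) by simp
  have n2: "\<not> fr ((cls L A = LK) # del k L) (lift 0 N)" using fr_lift[of 0 "del k L" "cls L A = LK" N] Prod(7) by simp
  have "\<not> fr (del (Suc k) ((cls L A = LK) # L)) (subst M (Suc k) (lift 0 N))"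
    using Prod(2)[of "Suc k" "(cls L A = LK) # L" "lift 0 N"] Prod(3,4,6) n n2 by simp
  moreover have "\<not> fr (del k L) (subst A k N)" using Prod by simp
  ultimately show ?case using a by simp
next
  case (Var i) thus ?case by auto
qed auto

lemma no_create: "\<not> fr (False # L) C \<Longrightarrow> \<not> fr L N \<Longrightarrow> cls L N = LO \<Longrightarrow> \<not> fr L (subst C 0 N)"
  using fr_subst[of 0 "False # L" N C] by simp


lemma cls_TypeS:
  assumes ps: "pts_spec Srt Ax Rl" and t: "typS Srt Ax Rl \<Gamma> X TypeS"
  shows "cls (lv \<Gamma>) X = LF"
proof -
  have "tri Srt Ax Rl \<Gamma> X TypeS" using soundness[OF ps t] by simp
  thus ?thesis unfolding tri_def using TypeS_TypeS by auto
qed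

lemma cls_obj:
  assumes ps: "pts_spec Srt Ax Rl" and t: "typS Srt Ax Rl \<Gamma> N A" and a: "typS Srt Ax Rl \<Gamma> A TypeS"
  shows "cls (lv \<Gamma>) N = LO"
proof -
  have "tri Srt Ax Rl \<Gamma> N A" using soundness[OF ps t] by simp
  thus ?thesis unfolding tri_def using a Kind_untyped TT_false by blast
qed

lemma cls_kl:
  assumes ps: "pts_spec Srt Ax Rl" and t: "typS Srt Ax Rl \<Gamma> P C" and a: "typS Srt Ax Rl \<Gamma> C KindS"
  shows "cls (lv \<Gamma>) P = LF"
proof -
  have "tri Srt Ax Rl \<Gamma> P C" using soundness[OF ps t] by simp
  thus ?thesis unfolding tri_def using a Kind_untyped TT_false by blast
qed

lemma bs_rds: "beta_star M N \<Longrightarrow> rds Ax Rl M N"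
  by (induct rule: rtranclp.induct) (auto intro: rtranclp.rtrancl_into_rtrancl ctxclos_mono)

lemma nf:
  assumes ps: "pts_spec Srt Ax Rl"
  shows "typS Srt Ax Rl \<Gamma> M C \<Longrightarrow> \<exists>M'. beta_star M M' \<and> \<not> fr (lv \<Gamma>) M'"
proof (induct M arbitrary: \<Gamma> C)
  case (App M N)
  obtain A B where ty: "typS Srt Ax Rl \<Gamma> M (Prod A B)" "typS Srt Ax Rl \<Gamma> N A"
    using gen_App[OF App(3)] by blast
  obtain M1 where M1: "beta_star M M1" "\<not> fr (lv \<Gamma>) M1" using App(1)[OF ty(1)] by blast
  obtain N1 where N1: "beta_star N N1" "\<not> fr (lv \<Gamma>) N1" using App(2)[OF ty(2)] by blast
  have tM1: "typS Srt Ax Rl \<Gamma> M1 (Prod A B)" using SRs[OF ps bs_rds[OF M1(1)] ty(1)] .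
  have tN1: "typS Srt Ax Rl \<Gamma> N1 A" using SRs[OF ps bs_rds[OF N1(1)] ty(2)] .
  have st: "beta_star (App M N) (App M1 N1)" using M1(1) N1(1) by (rule star_App)
  show ?case
  proof (cases "(\<exists>B C. M1 = Lam B C) \<and> cls (lv \<Gamma>) M1 = LF")
    case True
    then obtain B' C' where L: "M1 = Lam B' C'" by blast
    have "beta (App M1 N1) (subst C' 0 N1)" unfolding L by (auto intro: ctxclos.root beta_root.intros)
    hence st2: "beta_star (App M N) (subst C' 0 N1)" using st by auto
    obtain B0 s0 where g: "typS Srt Ax Rl \<Gamma> (Prod B' B0) s0" using gen_Lam[OF tM1[unfolded L]] by blast
    obtain s1 where b': "typS Srt Ax Rl \<Gamma> B' TypeS" using gen_Prod[OF g] by blast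
    have cB: "cls (lv \<Gamma>) B' = LF" using cls_TypeS[OF ps b'] .
    obtain s where "typS Srt Ax Rl \<Gamma> (Prod A B) s" using type_correct[OF ps tM1] by auto
    then obtain s2 where a: "typS Srt Ax Rl \<Gamma> A TypeS" using gen_Prod by blast
    have cN: "cls (lv \<Gamma>) N1 = LO" using cls_obj[OF ps tN1 a] .
    have "\<not> fr (False # lv \<Gamma>) C'" using M1(2) cB L by simp
    hence "\<not> fr (lv \<Gamma>) (subst C' 0 N1)" using no_create N1(2) cN by blast
    thus ?thesis using st2 by blast
  next
    case False
    thus ?thesis using st M1(2) N1(2) by auto
  qed
next
  case (Lam A M)
  obtain B s where g: "typS Srt Ax Rl \<Gamma> (Prod A B) s" "typS Srt Ax Rl (A # \<Gamma>) M B"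
    using gen_Lam[OF Lam(3)] by blast
  obtain s1 where a: "typS Srt Ax Rl \<Gamma> A TypeS" using gen_Prod[OF g(1)] by blast
  obtain A1 where A1: "beta_star A A1" "\<not> fr (lv \<Gamma>) A1" using Lam(1)[OF a] by blast
  obtain M1 where M1: "beta_star M M1" "\<not> fr (lv (A # \<Gamma>)) M1" using Lam(2)[OF g(2)] by blast
  have tA1: "typS Srt Ax Rl \<Gamma> A1 TypeS" using SRs[OF ps bs_rds[OF A1(1)] a] .
  have "cls (lv \<Gamma>) A1 = cls (lv \<Gamma>) A" using cls_TypeS[OF ps tA1] cls_TypeS[OF ps a] by simp
  hence "\<not> fr (lv \<Gamma>) (Lam A1 M1)" using A1(2) M1(2) by simp
  moreover have "beta_star (Lam A M) (Lam A1 M1)" using A1(1) M1(1) by (rule star_Lam)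
  ultimately show ?case by blast
next
  case (Prod A M)
  obtain s where g: "typS Srt Ax Rl \<Gamma> A TypeS" "typS Srt Ax Rl (A # \<Gamma>) M s"
    using gen_Prod[OF Prod(3)] by blast
  obtain A1 where A1: "beta_star A A1" "\<not> fr (lv \<Gamma>) A1" using Prod(1)[OF g(1)] by blast
  obtain M1 where M1: "beta_star M M1" "\<not> fr (lv (A # \<Gamma>)) M1" using Prod(2)[OF g(2)] by blast
  have tA1: "typS Srt Ax Rl \<Gamma> A1 TypeS" using SRs[OF ps bs_rds[OF A1(1)] g(1)] .
  have "cls (lv \<Gamma>) A1 = cls (lv \<Gamma>) A" using cls_TypeS[OF ps tA1] cls_TypeS[OF ps g(1)] by simp
  hence "\<not> fr (lv \<Gamma>) (Prod A1 M1)" using A1(2) M1(2) by simp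
  moreover have "beta_star (Prod A M) (Prod A1 M1)" using A1(1) M1(1) by (rule star_Prod)
  ultimately show ?case by blast
qed auto

lemma sub_fr: "subterm_ctx \<Gamma> M \<Delta> N \<Longrightarrow> N = App (Lam B C) P \<Longrightarrow> cls (lv \<Delta>) (Lam B C) = LF \<Longrightarrow> fr (lv \<Gamma>) M"
  by (induct rule: subterm_ctx.induct) auto

theorem lemma5p3:
  fixes Srt :: "'s set" and Ax :: "('s \<times> 's) set" and Rl :: "('s \<times> 's \<times> 's) set"
    and \<Gamma> :: "'s cst trm list" and M A :: "'s cst trm"
  assumes "pts_spec Srt Ax Rl"
    and "functional_spec Srt Ax Rl"
    and "wfS Srt Ax Rl \<Gamma>"
    and "typS Srt Ax Rl \<Gamma> M A"
  shows "\<exists>M'. beta_star M M' \<and> minus_term Srt Ax Rl \<Gamma> M'"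
proof -
  note ps = assms(1)
  obtain M' where M': "beta_star M M'" "\<not> fr (lv \<Gamma>) M'" using nf[OF ps assms(4)] by blast
  have t: "typS Srt Ax Rl \<Gamma> M' A" using SRs[OF ps bs_rds[OF M'(1)] assms(4)] .
  have "\<not> has_kind_redex (sigS Srt Ax Rl) (RS Ax Rl) \<Gamma> M'"
  proof
    assume "has_kind_redex (sigS Srt Ax Rl) (RS Ax Rl) \<Gamma> M'"
    then obtain \<Delta> B C P where s: "subterm_ctx \<Gamma> M' \<Delta> (App (Lam B C) P)"
      and k: "kind_level (sigS Srt Ax Rl) (RS Ax Rl) \<Delta> (App (Lam B C) P)"
      unfolding has_kind_redex_def by blast
    from k obtain D where "typS Srt Ax Rl \<Delta> (App (Lam B C) P) D" "typS Srt Ax Rl \<Delta> D KindS"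
      unfolding kind_level_def by blast
    hence "cls (lv \<Delta>) (App (Lam B C) P) = LF" by (rule cls_kl[OF ps])
    hence "fr (lv \<Gamma>) M'" using sub_fr[OF s HOL.refl] by simp
    thus False using M'(2) by simp
  qed
  thus ?thesis using M' t unfolding minus_term_def by blast
qed


end
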